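(* Let $\mathrm{R}$ be a real closed field, $P,Q,R,S\in\mathrm{R}[X]$ with $P,Q$ not both $0$ and $R,S$ not both $0$, and $a,b\in\mathrm{R}$ with $a<b$. (i) If $a$ is a bad number for $P,Q,R,S$ and $b$ is not, then $\mathrm{Ind}_a^b(PR-QS,PS+QR)=\mathrm{Ind}_a^b(P,Q)+\mathrm{Ind}_a^b(R,S)-\tfrac12\mathrm{Sign}(PS+QR,QS,b)$. (ii) If $b$ is a bad number for $P,Q,R,S$ and $a$ is not, then $\mathrm{Ind}_a^b(PR-QS,PS+QR)=\mathrm{Ind}_a^b(P,Q)+\mathrm{Ind}_a^b(R,S)+\tfrac12\mathrm{Sign}(PS+QR,QS,a)$. (iii) If $a$ and $b$ are both bad numbers for $P,Q,R,S$, then $\mathrm{Ind}_a^b(PR-QS,PS+QR)=\mathrm{Ind}_a^b(P,Q)+\mathrm{Ind}_a^b(R,S)$.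
   Context: For nonzero $P\in\mathrm{R}[X]$ and $x\in\mathrm{R}$ write uniquely $P=(X-x)^{\mathrm{mult}_x(P)}P_x$ with $P_x(x)\neq0$. For $P\ne0$, $Q\neq0$ set $\mathrm{val}_x(P/Q)=\mathrm{mult}_x(P)-\mathrm{mult}_x(Q)$, and $\mathrm{val}_x(0/Q)=+\infty$. $\mathrm{Sign}(P,Q,x)=\mathrm{sign}(P_x(x)Q_x(x))$ if $P\ne0$, $Q\ne0$ and $\mathrm{val}_x(P/Q)=0$, and $0$ otherwise. $\mathrm{Ind}^+_x(P,Q)=\tfrac12\,\mathrm{sign}(P_x(x)Q_x(x))$ and $\mathrm{Ind}^-_x(P,Q)=\tfrac12(-1)^{\mathrm{val}_x(P/Q)}\mathrm{sign}(P_x(x)Q_x(x))$ if $P\ne0$, $Q\neq0$ and $\mathrm{val}_x(P/Q)<0$, both $0$ otherwise; $\mathrm{Ind}_x=\mathrm{Ind}^+_x-\mathrm{Ind}^-_x$; for $a<b$, $\mathrm{Ind}_a^b(P,Q)=\mathrm{Ind}_a^+(P,Q)+\sum_{x\in(a,b)}\mathrm{Ind}_x(P,Q)-\mathrm{Ind}_b^-(P,Q)$. A number $c\in\mathrm{R}$ is a bad number for $P,Q,R,S$ if $Q\ne0$, $S\neq0$, $\mathrm{val}_c(P/Q)=\mathrm{val}_c(R/S)<0$ and $\mathrm{val}_c((PS+QR)/(QS))=0$. *)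

theory Defs
  imports "HOL-Computational_Algebra.Polynomial"
begin

class real_closed_field = linordered_field +
  assumes rcf_square: "0 \<le> x \<Longrightarrow> \<exists>y. x = y * y"
  assumes rcf_odd_root: "odd n \<Longrightarrow> c n \<noteq> 0 \<Longrightarrow> \<exists>x. (\<Sum>i\<le>n. c i * x ^ i) = 0"

text \<open>mult_x(P) is the library's order x P. The cofactor P_x with P = (X - x)^mult P_x.\<close>
definition cofac :: "'a::field \<Rightarrow> 'a poly \<Rightarrow> 'a poly" where
  "cofac x P = P div ([:-x, 1:] ^ order x P)"

text \<open>val_x(P/Q) = mult_x P - mult_x Q (meaningful for P, Q nonzero; the value +\<infinity> for P = 0
  is handled by explicit nonzeroness guards below).\<close>
definition valx :: "'a::field \<Rightarrow> 'a poly \<Rightarrow> 'a poly \<Rightarrow> int" where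
  "valx x P Q = int (order x P) - int (order x Q)"

definition Sign :: "'a::linordered_field poly \<Rightarrow> 'a poly \<Rightarrow> 'a \<Rightarrow> 'a" where
  "Sign P Q x = (if P \<noteq> 0 \<and> Q \<noteq> 0 \<and> valx x P Q = 0
      then sgn (poly (cofac x P) x * poly (cofac x Q) x) else 0)"

definition Ind_plus :: "'a::linordered_field \<Rightarrow> 'a poly \<Rightarrow> 'a poly \<Rightarrow> 'a" where
  "Ind_plus x P Q = (if P \<noteq> 0 \<and> Q \<noteq> 0 \<and> valx x P Q < 0
      then sgn (poly (cofac x P) x * poly (cofac x Q) x) / 2 else 0)"

definition Ind_minus :: "'a::linordered_field \<Rightarrow> 'a poly \<Rightarrow> 'a poly \<Rightarrow> 'a" where
  "Ind_minus x P Q = (if P \<noteq> 0 \<and> Q \<noteq> 0 \<and> valx x P Q < 0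
      then (-1) powi (valx x P Q) * sgn (poly (cofac x P) x * poly (cofac x Q) x) / 2 else 0)"

definition Ind_at :: "'a::linordered_field \<Rightarrow> 'a poly \<Rightarrow> 'a poly \<Rightarrow> 'a" where
  "Ind_at x P Q = Ind_plus x P Q - Ind_minus x P Q"

definition Ind_ab :: "'a::linordered_field \<Rightarrow> 'a \<Rightarrow> 'a poly \<Rightarrow> 'a poly \<Rightarrow> 'a" where
  "Ind_ab a b P Q = Ind_plus a P Q
     + (\<Sum>x\<in>{x. a < x \<and> x < b \<and> Ind_at x P Q \<noteq> 0}. Ind_at x P Q)
     - Ind_minus b P Q"

text \<open>Bad number. val_c(P/Q) < 0 forces P \<noteq> 0 (as val_c(0/Q) = +\<infinity>), similarly for R;
  val_c((PS+QR)/(QS)) = 0 forces PS+QR \<noteq> 0.\<close>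
definition bad :: "'a::field \<Rightarrow> 'a poly \<Rightarrow> 'a poly \<Rightarrow> 'a poly \<Rightarrow> 'a poly \<Rightarrow> bool" where
  "bad c P Q R S \<longleftrightarrow> Q \<noteq> 0 \<and> S \<noteq> 0 \<and> P \<noteq> 0 \<and> R \<noteq> 0
     \<and> valx c P Q = valx c R S \<and> valx c P Q < 0
     \<and> P * S + Q * R \<noteq> 0 \<and> valx c (P * S + Q * R) (Q * S) = 0"

end

theory Submission imports Defs "HOL-Algebra.Algebraic_Closure_Type" begin

hide_const (open) Coset.order Polynomials.degree UnivPoly.coeff module.smult Polynomials.lead_coeff up_ring.monom

section \<open>The embedding into the algebraic closure\<close>

abbreviation mp :: "'a::field poly \<Rightarrow> 'a alg_closure poly" where "mp p \<equiv> map_poly to_ac p"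

lemma coeff_mp[simp]: "coeff (mp p) n = to_ac (coeff p n)"
  by (simp add: coeff_map_poly)
lemma mp_add[simp]: "mp (p + q) = mp p + mp q" by (rule poly_eqI) simp
lemma mp_diff[simp]: "mp (p - q) = mp p - mp q" by (rule poly_eqI) simp
lemma mp_uminus[simp]: "mp (- p) = - mp p" by (rule poly_eqI) simp
lemma mp_smult[simp]: "mp (smult c p) = smult (to_ac c) (mp p)" by (rule poly_eqI) simp
lemma mp_pCons[simp]: "mp (pCons a p) = pCons (to_ac a) (mp p)"
  by (rule poly_eqI) (simp add: coeff_pCons split: nat.split)
lemma mp_mult[simp]: "mp (p * q) = mp p * mp q"
  by (induct p) (simp_all add: mult_pCons_left)
lemma mp_1[simp]: "mp 1 = 1" by (simp add: one_pCons)
lemma mp_power[simp]: "mp (p ^ n) = mp p ^ n" by (induct n) simp_all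
lemma mp_sum[simp]: "mp (sum f A) = (\<Sum>x\<in>A. mp (f x))"
  by (induct A rule: infinite_finite_induct) simp_all
lemma mp_prod[simp]: "mp (prod f A) = (\<Prod>x\<in>A. mp (f x))"
  by (induct A rule: infinite_finite_induct) simp_all
lemma poly_mp[simp]: "poly (mp p) (to_ac x) = to_ac (poly p x)"
  by (induct p) simp_all
lemma degree_mp[simp]: "degree (mp p) = degree p"
  by (rule degree_map_poly) simp
lemma mp_eq_0[simp]: "mp p = 0 \<longleftrightarrow> p = 0"
  by (metis degree_mp coeff_mp leading_coeff_0_iff to_ac_eq_0_iff)
lemma lead_coeff_mp[simp]: "lead_coeff (mp p) = to_ac (lead_coeff p)"
  by simp

lemma K_1[simp]: "1 \<in> range to_ac" by (metis to_ac_1 rangeI)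
lemma K_0[simp]: "0 \<in> range to_ac" by (metis to_ac_0 rangeI)
lemma K_to_ac[simp]: "to_ac x \<in> range to_ac" by (rule rangeI)
lemma K_add: assumes "a \<in> range to_ac" "b \<in> range to_ac" shows "a + b \<in> range to_ac"
proof -
  from assms obtain x y where "a = to_ac x" "b = to_ac y" by blast
  then have "a + b = to_ac (x + y)" by simp
  then show ?thesis by blast
qed
lemma K_diff: assumes "a \<in> range to_ac" "b \<in> range to_ac" shows "a - b \<in> range to_ac"
proof -
  from assms obtain x y where "a = to_ac x" "b = to_ac y" by blast
  then have "a - b = to_ac (x - y)" by simp
  then show ?thesis by blast
qed
lemma K_mult: assumes "a \<in> range to_ac" "b \<in> range to_ac" shows "a * b \<in> range to_ac"
proof -
  from assms obtain x y where "a = to_ac x" "b = to_ac y" by blast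
  then have "a * b = to_ac (x * y)" by simp
  then show ?thesis by blast
qed
lemma K_divide: assumes "a \<in> range to_ac" "b \<in> range to_ac" shows "a / b \<in> range to_ac"
proof -
  from assms obtain x y where "a = to_ac x" "b = to_ac y" by blast
  then have "a / b = to_ac (x / y)" by simp
  then show ?thesis by blast
qed
lemma K_power: assumes "a \<in> range to_ac" shows "a ^ n \<in> range to_ac"
proof -
  from assms obtain x where "a = to_ac x" by blast
  then have "a ^ n = to_ac (x ^ n)" by simp
  then show ?thesis by blast
qed
lemma K_of_nat[simp]: "of_nat n \<in> range to_ac"
  by (metis to_ac_of_nat rangeI)
lemma K_prod: "(\<And>i. i \<in> I \<Longrightarrow> f i \<in> range to_ac) \<Longrightarrow> prod f I \<in> range to_ac"
  by (induct I rule: infinite_finite_induct) (auto intro: K_mult)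
lemma K_sum: "(\<And>i. i \<in> I \<Longrightarrow> f i \<in> range to_ac) \<Longrightarrow> sum f I \<in> range to_ac"
  by (induct I rule: infinite_finite_induct) (auto intro: K_add)

lemma mset_idx:
  fixes A :: "'b multiset"
  shows "\<exists>\<alpha>. \<forall>f::'b \<Rightarrow> 'c::comm_monoid_mult. (\<Prod>x\<in>#A. f x) = (\<Prod>i<size A. f (\<alpha> i))"
proof (induct A)
  case empty
  then show ?case by simp
next
  case (add x A)
  then obtain \<alpha> where a: "\<And>f::'b \<Rightarrow> 'c. (\<Prod>x\<in>#A. f x) = (\<Prod>i<size A. f (\<alpha> i))" by blast
  define \<alpha>' where "\<alpha>' = \<alpha>(size A := x)"
  have "(\<Prod>x\<in>#add_mset x A. f x) = (\<Prod>i<size (add_mset x A). f (\<alpha>' i))" for f :: "'b \<Rightarrow> 'c"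
  proof -
    have "(\<Prod>i<size A. f (\<alpha>' i)) = (\<Prod>i<size A. f (\<alpha> i))"
      by (rule prod.cong) (auto simp: \<alpha>'_def)
    moreover have "\<alpha>' (size A) = x" by (simp add: \<alpha>'_def)
    ultimately show ?thesis using a[of f] by (simp only: size_add_mset prod.lessThan_Suc
        image_mset_add_mset prod_mset.add_mset mult.commute)
  qed
  then show ?case by (intro exI[of _ \<alpha>'] allI)
qed

lemma factor_idx:
  fixes p :: "'b::alg_closed_field poly"
  assumes "p \<noteq> 0"
  shows "\<exists>\<alpha>. p = smult (lead_coeff p) (\<Prod>i<degree p. [:-\<alpha> i, 1:])"
proof -
  obtain A where A: "size A = degree p" "p = smult (lead_coeff p) (\<Prod>x\<in>#A. [:-x, 1:])"
    using alg_closed_imp_factorization[OF assms] by blast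
  obtain \<alpha> where "\<forall>f::'b \<Rightarrow> 'b poly. (\<Prod>x\<in>#A. f x) = (\<Prod>i<size A. f (\<alpha> i))"
    using mset_idx by blast
  then have "(\<Prod>x\<in>#A. [:-x, 1:]) = (\<Prod>i<size A. [:-\<alpha> i, 1:])"
    by (rule spec)
  then have "p = smult (lead_coeff p) (\<Prod>i<degree p. [:-\<alpha> i, 1:])"
    using A by simp
  then show ?thesis by blast
qed

lemma degree_prod_lin[simp]: "degree (\<Prod>i<n. [:-\<alpha> i, 1::'b::idom:]) = n"
  by (simp add: degree_prod_eq_sum_degree)
lemma lead_coeff_prod_lin[simp]: "lead_coeff (\<Prod>i<n. [:-\<alpha> i, 1::'b::idom:]) = 1"
  by (simp add: lead_coeff_prod)
lemma poly_prod_lin[simp]: "poly (\<Prod>i<n. [:-\<alpha> i, 1::'b::idom:]) x = (\<Prod>i<n. x - \<alpha> i)"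
  by (simp add: poly_prod)


lemma K_m1[simp]: "-1 \<in> range to_ac"
proof -
  have "-1 = to_ac (-1)" by simp
  then show ?thesis by blast
qed

lemma norm_K:
  fixes p h :: "'a::field poly" and \<alpha> :: "nat \<Rightarrow> 'a alg_closure"
  assumes "mp p = smult cp (\<Prod>i<n. [:-\<alpha> i, 1:])" "p \<noteq> 0"
  shows "(\<Prod>i<n. poly (mp h) (\<alpha> i)) \<in> range to_ac"
  using assms
proof (induction n arbitrary: p h \<alpha> cp rule: less_induct)
  case (less n)
  have "lead_coeff (smult cp (\<Prod>i<n. [:-\<alpha> i, 1:])) = cp"
    by (simp only: lead_coeff_smult lead_coeff_prod_lin mult_1_right)
  then have cp: "cp = to_ac (lead_coeff p)" using less.prems(1) by (metis lead_coeff_mp)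
  have cp0: "cp \<noteq> 0" using cp less.prems(2) by simp
  have "degree (smult cp (\<Prod>i<n. [:-\<alpha> i, 1:])) = n"
    using cp0 by (simp only: degree_smult_eq degree_prod_lin if_False)
  then have degp: "degree p = n" using less.prems(1) by (metis degree_mp)
  have root: "poly (mp p) (\<alpha> i) = 0" if "i < n" for i
    using that by (simp add: less.prems(1)) (metis lessThan_iff)
  define r where "r = h mod p"
  have hr: "poly (mp h) (\<alpha> i) = poly (mp r) (\<alpha> i)" if "i < n" for i
  proof -
    have "h = h div p * p + r" by (simp add: r_def)
    then have "mp h = mp (h div p) * mp p + mp r" by (metis mp_add mp_mult)
    then show ?thesis using root[OF that] by simp
  qed
  then have eq1: "(\<Prod>i<n. poly (mp h) (\<alpha> i)) = (\<Prod>i<n. poly (mp r) (\<alpha> i))"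
    by (intro prod.cong) auto
  show ?case
  proof (cases "n = 0")
    case True
    then show ?thesis by simp
  next
    case False
    show ?thesis
    proof (cases "r = 0")
      case True
      have "(\<Prod>i<n. poly (mp r) (\<alpha> i)) = 0"
        using False True by (intro prod_zero) auto
      then show ?thesis using eq1 by (metis K_0)
    next
      case False
      define m where "m = degree r"
      have mn: "m < n" using degree_mod_less'[OF less.prems(2) False[unfolded r_def]] degp
        by (simp add: m_def r_def)
      obtain \<beta> where \<beta>: "mp r = smult (lead_coeff (mp r)) (\<Prod>j<degree (mp r). [:-\<beta> j, 1:])"
        using factor_idx[of "mp r"] False by auto
      define cr where "cr = to_ac (lead_coeff r)"
      have \<beta>': "mp r = smult cr (\<Prod>j<m. [:-\<beta> j, 1:])"
        using \<beta> by (simp add: cr_def m_def)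
      have IH: "(\<Prod>j<m. poly (mp p) (\<beta> j)) \<in> range to_ac"
        by (rule less.IH[OF mn \<beta>' False])
      define Xp where "Xp = (\<Prod>i<n. \<Prod>j<m. \<alpha> i - \<beta> j)"
      have e1: "(\<Prod>i<n. poly (mp r) (\<alpha> i)) = cr ^ n * Xp"
        by (simp add: \<beta>' Xp_def prod.distrib)
      have "(\<Prod>j<m. poly (mp p) (\<beta> j)) = (\<Prod>j<m. cp * (\<Prod>i<n. \<beta> j - \<alpha> i))"
        by (simp add: less.prems(1))
      also have "\<dots> = cp ^ m * (\<Prod>j<m. \<Prod>i<n. \<beta> j - \<alpha> i)"
        by (simp add: prod.distrib)
      also have "(\<Prod>j<m. \<Prod>i<n. \<beta> j - \<alpha> i) = (\<Prod>j<m. (-1) ^ n * (\<Prod>i<n. \<alpha> i - \<beta> j))"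
      proof (rule prod.cong)
        fix j
        have "(\<Prod>i<n. \<beta> j - \<alpha> i) = (\<Prod>i<n. (-1) * (\<alpha> i - \<beta> j))"
          by (rule prod.cong) auto
        also have "\<dots> = (-1) ^ n * (\<Prod>i<n. \<alpha> i - \<beta> j)"
          by (simp only: prod.distrib prod_constant card_lessThan)
        finally show "(\<Prod>i<n. \<beta> j - \<alpha> i) = (-1) ^ n * (\<Prod>i<n. \<alpha> i - \<beta> j)" .
      qed simp
      also have "\<dots> = (-1) ^ (n * m) * (\<Prod>j<m. \<Prod>i<n. \<alpha> i - \<beta> j)"
        by (simp only: prod.distrib prod_constant card_lessThan power_mult)
      also have "(\<Prod>j<m. \<Prod>i<n. \<alpha> i - \<beta> j) = Xp"
        unfolding Xp_def by (rule prod.swap)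
      finally have e2: "(\<Prod>j<m. poly (mp p) (\<beta> j)) = cp ^ m * ((-1) ^ (n * m) * Xp)" .
      have "Xp = (\<Prod>j<m. poly (mp p) (\<beta> j)) / (cp ^ m * (-1) ^ (n * m))"
        using e2 cp0 by (simp add: field_simps)
      then have "Xp \<in> range to_ac"
        using IH cp by (auto intro!: K_divide K_mult K_power)
      then show ?thesis using eq1 e1 cr_def by (auto intro!: K_mult K_power)
    qed
  qed
qed

lemma interp_K:
  fixes S :: "'a::field alg_closure poly"
  assumes "infinite A" "\<And>x. x \<in> A \<Longrightarrow> poly S (to_ac x) \<in> range to_ac"
  shows "coeff S i \<in> range to_ac"
  using assms
proof (induction "degree S" arbitrary: S A i rule: less_induct)
  case less
  obtain x0 where x0: "x0 \<in> A" using less.prems(1) by (metis all_not_in_conv finite.emptyI)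
  show ?case
  proof (cases "degree S = 0")
    case True
    then obtain c where S: "S = [:c:]" by (meson degree_eq_zeroE)
    have "c \<in> range to_ac" using less.prems(2)[OF x0] S by simp
    then show ?thesis using S by (cases i) auto
  next
    case False
    define X0 where "X0 = to_ac x0"
    define c0 where "c0 = poly S X0"
    have c0K: "c0 \<in> range to_ac" using less.prems(2)[OF x0] by (simp add: c0_def X0_def)
    have "poly (S - [:c0:]) X0 = 0" by (simp add: c0_def)
    then obtain T where T: "S - [:c0:] = [:-X0, 1:] * T"
      by (meson dvdE poly_eq_0_iff_dvd)
    have ST: "S = [:-X0, 1:] * T + [:c0:]" using T by (simp add: algebra_simps)
    have T0: "T \<noteq> 0" using ST False by auto
    have degT: "degree T < degree S"
    proof -
      have d1: "degree ([:-X0, 1:] * T) = Suc (degree T)"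
        using T0 degree_mult_eq[of "[:-X0, 1:]" T] by (simp del: mult_pCons_left)
      have "degree S = degree ([:-X0, 1:] * T + [:c0:])" using ST by simp
      also have "\<dots> = degree ([:-X0, 1:] * T)"
        by (rule degree_add_eq_left) (use d1 in \<open>simp del: mult_pCons_left\<close>)
      also have "\<dots> = Suc (degree T)" by (rule d1)
      finally show ?thesis by simp
    qed
    have TK: "poly T (to_ac x) \<in> range to_ac" if "x \<in> A - {x0}" for x
    proof -
      have ne: "to_ac x - X0 \<noteq> 0" using that by (simp add: X0_def)
      have "poly S (to_ac x) = (to_ac x - X0) * poly T (to_ac x) + c0"
        by (subst ST) (simp add: algebra_simps)
      then have "poly T (to_ac x) = (poly S (to_ac x) - c0) / (to_ac x - X0)"
        using ne by (simp add: field_simps)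
      then show ?thesis using less.prems(2) that c0K
        by (auto intro!: K_divide K_diff simp: X0_def)
    qed
    have inf: "infinite (A - {x0})" using less.prems(1) by simp
    have cT: "coeff T j \<in> range to_ac" for j
      by (rule less.hyps[OF degT inf TK])
    have "coeff S i = - X0 * coeff T i + (case i of 0 \<Rightarrow> 0 | Suc k \<Rightarrow> coeff T k) + coeff [:c0:] i"
      by (subst ST) (simp add: coeff_pCons split: nat.split)
    then show ?thesis using cT c0K
      by (cases i) (auto intro!: K_add K_mult K_diff simp: X0_def coeff_pCons split: nat.split)
  qed
qed

lemma sqrt_K:
  fixes q :: "'a::field_char_0 alg_closure poly"
  assumes "lead_coeff q = 1" "\<And>i. coeff (q * q) i \<in> range to_ac"
  shows "coeff q i \<in> range to_ac"
proof (induction "degree q - i" arbitrary: i rule: less_induct)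
  case less
  define m where "m = degree q"
  show ?case
  proof (cases "m \<le> i")
    case True
    then show ?thesis
      using assms(1) by (cases "i = m") (auto simp: m_def coeff_eq_0)
  next
    case False
    then have im: "i < m" by simp
    have IH: "coeff q j \<in> range to_ac" if "i < j" for j
      using less[of j] that im by (simp add: m_def)
    define f where "f j = coeff q j * coeff q (m + i - j)" for j
    have "coeff (q * q) (m + i) = (\<Sum>j\<le>m + i. f j)"
      by (simp add: coeff_mult f_def)
    also have "\<dots> = (\<Sum>j\<in>{i..m}. f j)"
    proof (rule sum.mono_neutral_right)
      show "\<forall>j\<in>{..m + i} - {i..m}. f j = 0"
      proof
        fix j assume j: "j \<in> {..m + i} - {i..m}"
        show "f j = 0"
        proof (cases "j < i")
          case True
          then have "m + i - j > m" using j by auto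
          then show ?thesis by (simp add: f_def coeff_eq_0 m_def)
        next
          case False
          then have "j > m" using j by auto
          then show ?thesis by (simp add: f_def coeff_eq_0 m_def)
        qed
      qed
    qed auto
    also have "{i..m} = insert i (insert m {i<..<m})" using im by auto
    also have "(\<Sum>j\<in>insert i (insert m {i<..<m}). f j) = f i + f m + (\<Sum>j\<in>{i<..<m}. f j)"
      using im by (simp add: add.assoc)
    also have "f i = coeff q i" using assms(1) by (simp add: f_def m_def)
    also have "f m = coeff q i" using assms(1) by (simp add: f_def m_def)
    finally have eq: "coeff (q * q) (m + i) = 2 * coeff q i + (\<Sum>j\<in>{i<..<m}. f j)" by simp
    have sK: "(\<Sum>j\<in>{i<..<m}. f j) \<in> range to_ac"
    proof (rule K_sum)
      fix j assume "j \<in> {i<..<m}"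
      then show "f j \<in> range to_ac" unfolding f_def by (auto intro!: K_mult IH)
    qed
    have "coeff q i = (coeff (q * q) (m + i) - (\<Sum>j\<in>{i<..<m}. f j)) / 2"
      using eq by simp
    then show ?thesis using sK assms(2)
      by (metis K_diff K_divide K_of_nat of_nat_numeral)
  qed
qed


definition ii :: "'a::field alg_closure" where "ii = (SOME y. y ^ 2 = -1)"

lemma ii_sq: "ii * ii = (-1 :: 'a::field alg_closure)"
proof -
  have "\<exists>y::'a alg_closure. y ^ 2 = -1" by (rule nth_root_exists) simp
  then have "(ii::'a alg_closure) ^ 2 = -1" unfolding ii_def by (rule someI_ex)
  then show ?thesis by (simp add: power2_eq_square)
qed

definition Cs :: "'a::field alg_closure set" where
  "Cs = {to_ac a + ii * to_ac b | a b. True}"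

lemma CsI: "to_ac a + ii * to_ac b \<in> Cs" unfolding Cs_def by blast
lemma CsE: assumes "z \<in> Cs" obtains a b where "z = to_ac a + ii * to_ac b"
  using assms unfolding Cs_def by blast
lemma Cs_to_ac[simp]: "to_ac a \<in> Cs"
  using CsI[of a 0] by simp
lemma Cs_of_nat[simp]: "of_nat n \<in> Cs"
  using Cs_to_ac[of "of_nat n"] by simp

lemma Cs_add: assumes "z \<in> Cs" "w \<in> Cs" shows "z + w \<in> Cs"
proof -
  obtain a b where z: "z = to_ac a + ii * to_ac b" using assms(1) by (rule CsE)
  obtain c d where w: "w = to_ac c + ii * to_ac d" using assms(2) by (rule CsE)
  have eq: "z + w = to_ac (a + c) + ii * to_ac (b + d)" by (simp add: z w algebra_simps)
  show ?thesis by (subst eq) (rule CsI)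
qed

lemma Cs_diff: assumes "z \<in> Cs" "w \<in> Cs" shows "z - w \<in> Cs"
proof -
  obtain a b where z: "z = to_ac a + ii * to_ac b" using assms(1) by (rule CsE)
  obtain c d where w: "w = to_ac c + ii * to_ac d" using assms(2) by (rule CsE)
  have eq: "z - w = to_ac (a - c) + ii * to_ac (b - d)" by (simp add: z w algebra_simps)
  show ?thesis by (subst eq) (rule CsI)
qed

lemma mult_ii_form:
  "(A + ii * B) * (C + ii * D) = (A * C - B * D) + ii * (A * D + B * C)"
  for A B C D :: "'a::field alg_closure"
proof -
  have "(A + ii * B) * (C + ii * D) = A * C + ii * (A * D + B * C) + (ii * ii) * (B * D)"
    by (simp add: algebra_simps)
  then show ?thesis by (simp add: ii_sq)
qed

lemma Cs_mult: assumes "z \<in> Cs" "w \<in> Cs" shows "z * w \<in> Cs"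
proof -
  obtain a b where z: "z = to_ac a + ii * to_ac b" using assms(1) by (rule CsE)
  obtain c d where w: "w = to_ac c + ii * to_ac d" using assms(2) by (rule CsE)
  have eq: "z * w = to_ac (a * c - b * d) + ii * to_ac (a * d + b * c)"
    by (simp add: z w mult_ii_form)
  show ?thesis by (subst eq) (rule CsI)
qed

lemma Cs_indep:
  fixes a b :: "'a::linordered_field"
  assumes "to_ac a + ii * to_ac b = 0"
  shows "b = 0"
proof (rule ccontr)
  assume b: "b \<noteq> 0"
  have "ii * to_ac b = to_ac (- a)" using assms by (simp add: eq_neg_iff_add_eq_0 add.commute)
  then have e: "ii = to_ac (- a / b)" using b by (simp add: field_simps)
  have "to_ac ((- a / b) * (- a / b)) = ii * ii" by (simp only: e to_ac_mult)
  then have "to_ac ((- a / b) * (- a / b)) = to_ac (-1)" by (simp only: ii_sq to_ac_minus to_ac_1)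
  then have "(- a / b) * (- a / b) = -1" by (simp only: to_ac_eq_iff)
  moreover have "(- a / b) * (- a / b) \<ge> 0" by simp
  ultimately show False by simp
qed

lemma csqrt_F:
  fixes a b :: "'a::real_closed_field"
  shows "\<exists>x y. x * x - y * y = a \<and> 2 * x * y = b"
proof (cases "b = 0")
  case True
  show ?thesis
  proof (cases "a \<ge> 0")
    case True
    then obtain x where "a = x * x" using rcf_square by blast
    then show ?thesis using \<open>b = 0\<close> by (intro exI[of _ x] exI[of _ 0]) simp
  next
    case False
    then obtain y where "- a = y * y" using rcf_square[of "-a"] by auto
    then show ?thesis using \<open>b = 0\<close> by (intro exI[of _ 0] exI[of _ y]) simp
  qed
next
  case False
  obtain r0 where r0: "a * a + b * b = r0 * r0"
    using rcf_square[of "a * a + b * b"] by (metis add_nonneg_nonneg zero_le_square)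
  define r where "r = \<bar>r0\<bar>"
  have rr: "r * r = a * a + b * b" and r0: "r \<ge> 0" using r0 by (auto simp: r_def abs_mult_self_eq)
  have "a\<^sup>2 \<le> r\<^sup>2" using rr by (simp add: power2_eq_square)
  then have ar: "\<bar>a\<bar> \<le> r" using r0 by (simp add: power2_le_iff_abs_le)
  have "0 \<le> (r + a) / 2" "0 \<le> (r - a) / 2" using ar by auto
  then obtain x0 y0 where x0: "(r + a) / 2 = x0 * x0" and y0: "(r - a) / 2 = y0 * y0"
    using rcf_square by meson
  define x where "x = \<bar>x0\<bar>"
  define y where "y = sgn b * \<bar>y0\<bar>"
  have xx: "x * x = (r + a) / 2" using x0 by (simp add: x_def abs_mult_self_eq)
  have yy: "y * y = (r - a) / 2" using y0 False
    by (simp add: y_def abs_mult_self_eq algebra_simps sgn_mult_self_eq)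
  have e1: "x * x - y * y = a" using xx yy by (simp add: field_simps)
  have "(2 * x * y) * (2 * x * y) = 4 * (x * x) * (y * y)" by (simp add: algebra_simps)
  also have "\<dots> = (r * r - a * a)" by (simp add: xx yy field_simps)
  also have "\<dots> = b * b" using rr by simp
  finally have sq: "(2 * x * y) * (2 * x * y) = b * b" .
  have sb: "sgn b * b = \<bar>b\<bar>" by (simp add: abs_if sgn_if)
  have "(2 * x * y) * b = 2 * x * \<bar>y0\<bar> * (sgn b * b)" by (simp add: y_def mult_ac)
  also have "\<dots> = 2 * \<bar>x0\<bar> * \<bar>y0\<bar> * \<bar>b\<bar>" by (simp only: sb x_def)
  finally have pe: "(2 * x * y) * b = 2 * \<bar>x0\<bar> * \<bar>y0\<bar> * \<bar>b\<bar>" .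
  have pos: "(2 * x * y) * b \<ge> 0" unfolding pe by simp
  have "(2 * x * y - b) * (2 * x * y + b) = 0" using sq by (simp add: algebra_simps)
  then have "2 * x * y = b \<or> 2 * x * y = - b" by (simp add: eq_neg_iff_add_eq_0)
  moreover have "2 * x * y \<noteq> - b"
  proof
    assume "2 * x * y = - b"
    then have "(2 * x * y) * b = - (b * b)" by simp
    moreover have "b * b > 0" using False by (auto simp: zero_less_mult_iff linorder_neq_iff)
    ultimately show False using pos by simp
  qed
  ultimately have "2 * x * y = b" by blast
  then show ?thesis using e1 by blast
qed

lemma Cs_sqrt:
  fixes z :: "'a::real_closed_field alg_closure"
  assumes "z \<in> Cs" shows "\<exists>w\<in>Cs. w * w = z"
proof -
  obtain a b where z: "z = to_ac a + ii * to_ac b" using assms by (rule CsE)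
  obtain x y where xy: "x * x - y * y = a" "2 * x * y = b" using csqrt_F by blast
  have "(to_ac x + ii * to_ac y) * (to_ac x + ii * to_ac y) =
     (to_ac x * to_ac x - to_ac y * to_ac y) + ii * (to_ac x * to_ac y + to_ac y * to_ac x)"
    by (rule mult_ii_form)
  also have "\<dots> = to_ac (x * x - y * y) + ii * to_ac (2 * x * y)"
    by (simp add: algebra_simps)
  finally have "(to_ac x + ii * to_ac y) * (to_ac x + ii * to_ac y) = z" using xy z by simp
  then show ?thesis using CsI by blast
qed

lemma Cs_quad:
  fixes s t \<alpha> :: "'a::real_closed_field alg_closure"
  assumes "s \<in> Cs" "t \<in> Cs" "\<alpha> * \<alpha> - s * \<alpha> + t = 0"
  shows "\<alpha> \<in> Cs"
proof -
  have dC: "s * s - 4 * t \<in> Cs"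
    using assms by (intro Cs_diff Cs_mult) (auto simp: Cs_of_nat[of 4, simplified])
  obtain w where w: "w \<in> Cs" "w * w = s * s - 4 * t" using Cs_sqrt[OF dC] by blast
  have "(2 * \<alpha> - s - w) * (2 * \<alpha> - s + w) = 4 * (\<alpha> * \<alpha> - s * \<alpha> + t) + (s * s - 4 * t) - w * w"
    by (simp add: algebra_simps)
  also have "\<dots> = 0" using assms(3) w(2) by simp
  finally have "2 * \<alpha> - s - w = 0 \<or> 2 * \<alpha> - s + w = 0" by simp
  moreover have "\<alpha> = to_ac (1/2) * (s + w)" if "2 * \<alpha> - s - w = 0"
  proof -
    have "\<alpha> = (s + w) / 2" using that by (simp add: field_simps)
    then show ?thesis by simp
  qed
  moreover have "\<alpha> = to_ac (1/2) * (s - w)" if "2 * \<alpha> - s + w = 0"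
  proof -
    have "\<alpha> = (s - w) / 2" using that by (simp add: field_simps)
    then show ?thesis by simp
  qed
  ultimately have "\<alpha> = to_ac (1/2) * (s + w) \<or> \<alpha> = to_ac (1/2) * (s - w)" by blast
  moreover have "to_ac (1/2) * (s + w) \<in> Cs" "to_ac (1/2) * (s - w) \<in> Cs"
    using assms w by (meson Cs_mult Cs_add Cs_diff Cs_to_ac)+
  ultimately show ?thesis by metis
qed


lemma two_adic: "n > 0 \<Longrightarrow> \<exists>k m. n = 2 ^ k * m \<and> odd (m::nat)"
proof (induction n rule: less_induct)
  case (less n)
  show ?case
  proof (cases "odd n")
    case True
    then show ?thesis by (intro exI[of _ 0] exI[of _ n]) simp
  next
    case False
    then obtain n' where n: "n = 2 * n'" by blast
    then have "n' < n" "n' > 0" using less.prems by auto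
    then obtain k m where "n' = 2 ^ k * m" "odd m" using less.IH by blast
    then show ?thesis using n by (intro exI[of _ "Suc k"] exI[of _ m]) simp
  qed
qed

lemma finite_pairs: "finite {(i, j). i < j \<and> j < (n::nat)}"
  by (rule finite_subset[of _ "{..<n} \<times> {..<n}"]) auto

lemma card_pairs: "card {(i, j). i < j \<and> j < (n::nat)} * 2 = n * (n - 1)"
proof (induction n)
  case 0
  then show ?case by simp
next
  case (Suc n)
  have eq: "{(i, j). i < j \<and> j < Suc n} = {(i, j). i < j \<and> j < n} \<union> (\<lambda>i. (i, n)) ` {..<n}"
    by auto
  have "card {(i, j). i < j \<and> j < Suc n} = card {(i, j). i < j \<and> j < n} + card ((\<lambda>i. (i, n)) ` {..<n})"
    unfolding eq by (rule card_Un_disjoint) (auto simp: finite_pairs)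
  also have "card ((\<lambda>i. (i, n)) ` {..<n}) = n"
    by (subst card_image) (auto simp: inj_on_def)
  finally show ?case using Suc.IH by (cases n) (auto simp: algebra_simps)
qed

lemma prod_pairs_split:
  fixes g :: "nat \<Rightarrow> nat \<Rightarrow> 'b::comm_monoid_mult"
  assumes sym: "\<And>i j. g i j = g j i"
  shows "(\<Prod>i<n. \<Prod>j<n. g i j) = (\<Prod>i<n. g i i) * (\<Prod>pr\<in>{(i, j). i < j \<and> j < n}. g (fst pr) (snd pr)) ^ 2"
proof -
  define P where "P = {(i, j). i < j \<and> j < n}"
  define P' where "P' = {(i, j). j < i \<and> i < n}"
  define D where "D = (\<lambda>i. (i, i)) ` {..<n}"
  have fin: "finite P" "finite P'" "finite D"
    unfolding P_def P'_def D_def using finite_pairs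
    by (auto intro: finite_subset[of _ "{..<n} \<times> {..<n}"])
  have "(\<Prod>i<n. \<Prod>j<n. g i j) = (\<Prod>pr\<in>{..<n} \<times> {..<n}. g (fst pr) (snd pr))"
    by (simp add: prod.cartesian_product case_prod_beta)
  also have "{..<n} \<times> {..<n} = D \<union> (P \<union> P')"
    unfolding D_def P_def P'_def by auto
  also have "(\<Prod>pr\<in>D \<union> (P \<union> P'). g (fst pr) (snd pr)) =
      (\<Prod>pr\<in>D. g (fst pr) (snd pr)) * ((\<Prod>pr\<in>P. g (fst pr) (snd pr)) * (\<Prod>pr\<in>P'. g (fst pr) (snd pr)))"
    using fin by (subst prod.union_disjoint, auto simp: D_def P_def P'_def,
        subst prod.union_disjoint, auto)
  also have "(\<Prod>pr\<in>D. g (fst pr) (snd pr)) = (\<Prod>i<n. g i i)"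
    unfolding D_def by (subst prod.reindex) (auto simp: inj_on_def)
  also have "P' = prod.swap ` P" unfolding P_def P'_def by auto
  also have "(\<Prod>pr\<in>prod.swap ` P. g (fst pr) (snd pr)) = (\<Prod>pr\<in>P. g (fst pr) (snd pr))"
    by (subst prod.reindex) (auto simp: sym)
  finally show ?thesis by (simp add: P_def power2_eq_square)
qed

lemma homog:
  fixes P :: "'b::field poly"
  assumes P: "P = smult c (\<Prod>j<n. [:-\<alpha> j, 1:])"
  shows "(\<Sum>k\<le>n. coeff P k * u ^ k * v ^ (n - k)) = c * (\<Prod>j<n. u - \<alpha> j * v)"
proof (cases "c = 0")
  case True
  then show ?thesis using P by simp
next
  case c: False
  have degP: "degree P = n" using P c by (simp add: degree_smult_eq)
  have lcP: "coeff P n = c" using P c degP by (metis lead_coeff_prod_lin lead_coeff_smult mult.right_neutral)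
  show ?thesis
  proof (cases "v = 0")
    case True
    have "(\<Sum>k\<le>n. coeff P k * u ^ k * v ^ (n - k)) = (\<Sum>k\<in>insert n {..<n}. coeff P k * u ^ k * v ^ (n - k))"
      by (rule sum.cong) auto
    also have "\<dots> = coeff P n * u ^ n + (\<Sum>k<n. coeff P k * u ^ k * v ^ (n - k))"
      by simp
    also have "(\<Sum>k<n. coeff P k * u ^ k * v ^ (n - k)) = 0"
      using True by (intro sum.neutral) auto
    finally show ?thesis using True lcP by (simp add: prod_constant)
  next
    case False
    have "(\<Sum>k\<le>n. coeff P k * u ^ k * v ^ (n - k)) = (\<Sum>k\<le>n. v ^ n * (coeff P k * (u / v) ^ k))"
    proof (rule sum.cong)
      fix k assume "k \<in> {..n}"
      then have "v ^ n = v ^ k * v ^ (n - k)" by (simp add: power_add[symmetric])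
      then show "coeff P k * u ^ k * v ^ (n - k) = v ^ n * (coeff P k * (u / v) ^ k)"
        using False by (simp add: power_divide field_simps)
    qed simp
    also have "\<dots> = v ^ n * poly P (u / v)"
      by (simp add: poly_altdef degP sum_distrib_left)
    also have "\<dots> = c * (\<Prod>j<n. v * (u / v - \<alpha> j))"
      by (simp add: P prod.distrib prod_constant)
    also have "(\<Prod>j<n. v * (u / v - \<alpha> j)) = (\<Prod>j<n. u - \<alpha> j * v)"
      using False by (intro prod.cong) (auto simp: field_simps)
    finally show ?thesis .
  qed
qed


lemma map_of_ac:
  fixes q :: "'a::field alg_closure poly"
  assumes "\<And>i. coeff q i \<in> range to_ac"
  shows "mp (map_poly of_ac q) = q"
  by (rule poly_eqI) (simp add: coeff_map_poly assms to_ac_of_ac)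

theorem fta_Cs:
  fixes p :: "'a::real_closed_field poly"
  assumes "degree p > 0"
  shows "\<exists>z\<in>Cs. poly (mp p) z = 0"
proof -
  obtain k m where km: "degree p = 2 ^ k * m" "odd m" using two_adic[OF assms] by blast
  then show ?thesis using assms
  proof (induction k arbitrary: p m)
    case 0
    then have odd: "odd (degree p)" by simp
    have "coeff p (degree p) \<noteq> 0" using 0 by auto
    then obtain x where "(\<Sum>i\<le>degree p. coeff p i * x ^ i) = 0"
      using rcf_odd_root[OF odd] by blast
    then have "poly p x = 0" by (simp add: poly_altdef)
    then have "poly (mp p) (to_ac x) = 0" by simp
    then show ?case using Cs_to_ac by blast
  next
    case (Suc k)
    define n where "n = degree p"
    have p0: "p \<noteq> 0" using Suc.prems by auto
    have evn: "even n" using Suc.prems by (simp add: n_def)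
    have n2: "n \<ge> 2" using Suc.prems evn by (simp add: n_def)
    obtain \<alpha> where \<alpha>: "mp p = smult (lead_coeff (mp p)) (\<Prod>i<degree (mp p). [:-\<alpha> i, 1:])"
      using factor_idx[of "mp p"] p0 by auto
    define cp where "cp = to_ac (lead_coeff p)"
    have \<alpha>': "mp p = smult cp (\<Prod>i<n. [:-\<alpha> i, 1:])" using \<alpha> by (simp add: n_def cp_def)
    have cp0: "cp \<noteq> 0" using p0 by (simp add: cp_def)
    have root: "poly (mp p) (\<alpha> i) = 0" if "i < n" for i
      using that by (simp add: \<alpha>') (metis lessThan_iff)
    define Pairs where "Pairs = {(i, j). i < j \<and> j < n}"
    have finP: "finite Pairs" unfolding Pairs_def by (rule finite_pairs)
    define \<beta> where "\<beta> c i j = \<alpha> i + \<alpha> j + of_nat c * \<alpha> i * \<alpha> j" for c :: nat and i j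
    have \<beta>sym: "\<beta> c i j = \<beta> c j i" for c i j by (simp add: \<beta>_def algebra_simps)
    define qc where "qc c = (\<Prod>pr\<in>Pairs. [:-\<beta> c (fst pr) (snd pr), 1:])" for c
    have poly_qc: "poly (qc c) z = (\<Prod>pr\<in>Pairs. z - \<beta> c (fst pr) (snd pr))" for c z
      by (simp add: qc_def poly_prod)
    have lc_qc: "lead_coeff (qc c) = 1" for c by (simp add: qc_def lead_coeff_prod)
    have deg_qc: "degree (qc c) = card Pairs" for c
      by (simp add: qc_def degree_prod_eq_sum_degree)
    have claim: "\<exists>q'. mp q' = qc c" for c
    proof -
      define Dv where "Dv Xv = (\<Prod>i<n. Xv - \<beta> c i i)" for Xv
      have valK: "poly (qc c * qc c) (to_ac x0) \<in> range to_ac" if Dv0: "Dv (to_ac x0) \<noteq> 0" for x0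
      proof -
        define Xv where "Xv = to_ac x0"
        define lc where "lc = lead_coeff p"
        have lc0: "lc \<noteq> 0" using p0 by (simp add: lc_def)
        define h where "h = smult (1 / lc) (\<Sum>k\<le>n. smult (coeff p k) ([:x0, -1:] ^ k * [:1, of_nat c:] ^ (n - k)))"
        have polyh: "poly (mp h) y = (\<Prod>j<n. Xv - \<beta> c i j)" if "y = \<alpha> i" for y i
        proof -
          have "poly (mp h) y = to_ac (1 / lc) * (\<Sum>k\<le>n. coeff (mp p) k * (Xv - y) ^ k * (1 + of_nat c * y) ^ (n - k))"
            by (simp add: h_def poly_sum Xv_def poly_power algebra_simps)
          also have "(\<Sum>k\<le>n. coeff (mp p) k * (Xv - y) ^ k * (1 + of_nat c * y) ^ (n - k)) =
              cp * (\<Prod>j<n. (Xv - y) - \<alpha> j * (1 + of_nat c * y))"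
            by (rule homog[OF \<alpha>'])
          also have "to_ac (1 / lc) * (cp * (\<Prod>j<n. (Xv - y) - \<alpha> j * (1 + of_nat c * y))) =
              (\<Prod>j<n. (Xv - y) - \<alpha> j * (1 + of_nat c * y))"
            using lc0 by (simp add: cp_def lc_def)
          also have "\<dots> = (\<Prod>j<n. Xv - \<beta> c i j)"
            by (rule prod.cong) (auto simp: \<beta>_def that algebra_simps)
          finally show ?thesis .
        qed
        have full: "(\<Prod>i<n. \<Prod>j<n. Xv - \<beta> c i j) \<in> range to_ac"
        proof -
          have "(\<Prod>i<n. \<Prod>j<n. Xv - \<beta> c i j) = (\<Prod>i<n. poly (mp h) (\<alpha> i))"
            by (rule prod.cong) (auto simp: polyh)
          then show ?thesis using norm_K[OF \<alpha>' p0] by simp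
        qed
        define h2 where "h2 = [:x0, -2, - of_nat c:]"
        have DK: "Dv Xv \<in> range to_ac"
        proof -
          have "Dv Xv = (\<Prod>i<n. poly (mp h2) (\<alpha> i))"
            unfolding Dv_def by (rule prod.cong) (auto simp: h2_def Xv_def \<beta>_def algebra_simps)
          then show ?thesis using norm_K[OF \<alpha>' p0] by simp
        qed
        have split: "(\<Prod>i<n. \<Prod>j<n. Xv - \<beta> c i j) = Dv Xv * (poly (qc c) Xv) ^ 2"
          unfolding Dv_def poly_qc Pairs_def
          by (rule prod_pairs_split) (simp add: \<beta>sym)
        have "poly (qc c * qc c) Xv = (\<Prod>i<n. \<Prod>j<n. Xv - \<beta> c i j) / Dv Xv"
          using split Dv0 by (simp add: Xv_def power2_eq_square)
        then show ?thesis using full DK by (simp add: Xv_def K_divide)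
      qed
      have fin: "finite (to_ac -` ((\<lambda>i. \<beta> c i i) ` {..<n}))"
        by (rule finite_vimageI) (auto simp: inj_to_ac)
      have sub: "UNIV - to_ac -` ((\<lambda>i. \<beta> c i i) ` {..<n}) \<subseteq> {x0. Dv (to_ac x0) \<noteq> 0}"
        by (auto simp: Dv_def)
      have inf: "infinite {x0 :: 'a. Dv (to_ac x0) \<noteq> 0}"
        using infinite_super[OF sub Diff_infinite_finite[OF fin infinite_UNIV_char_0]] .
      have cS: "coeff (qc c * qc c) i \<in> range to_ac" for i
        by (rule interp_K[OF inf]) (use valK in auto)
      have "coeff (qc c) i \<in> range to_ac" for i
        by (rule sqrt_K[OF lc_qc cS])
      then show ?thesis using map_of_ac by blast
    qed
    have cardP: "card Pairs = 2 ^ k * (m * (n - 1))"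
    proof -
      define N1 where "N1 = n - 1"
      have e: "card Pairs * 2 = n * N1" unfolding Pairs_def N1_def by (rule card_pairs)
      have nn: "n = 2 ^ Suc k * m" using Suc.prems by (simp add: n_def)
      have "n * N1 = (2 ^ k * (m * N1)) * 2" by (subst nn) (simp add: mult_ac)
      then have "card Pairs * 2 = (2 ^ k * (m * N1)) * 2" using e by simp
      then have "card Pairs = 2 ^ k * (m * N1)" by simp
      then show ?thesis by (simp only: N1_def)
    qed
    have oddm: "odd (m * (n - 1))" using Suc.prems(2) evn n2 by simp
    have cardpos: "card Pairs > 0"
    proof -
      have "(0, 1) \<in> Pairs" using n2 by (simp add: Pairs_def)
      then show ?thesis using finP card_gt_0_iff by blast
    qed
    have ex: "\<exists>pr\<in>Pairs. \<beta> c (fst pr) (snd pr) \<in> Cs" for c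
    proof -
      obtain q' where q': "mp q' = qc c" using claim by blast
      have "degree q' = 2 ^ k * (m * (n - 1))" using q' deg_qc[of c] cardP by (metis degree_mp)
      moreover have "degree q' > 0" using q' deg_qc[of c] cardpos by (metis degree_mp)
      ultimately obtain z where z: "z \<in> Cs" "poly (mp q') z = 0"
        using Suc.IH oddm by blast
      then have "(\<Prod>pr\<in>Pairs. z - \<beta> c (fst pr) (snd pr)) = 0" using q' poly_qc by simp
      then obtain pr where "pr \<in> Pairs" "z = \<beta> c (fst pr) (snd pr)"
        using finP by (auto simp: prod_zero_iff)
      then show ?thesis using z by blast
    qed
    then obtain f where f: "\<And>c. f c \<in> Pairs" "\<And>c. \<beta> c (fst (f c)) (snd (f c)) \<in> Cs"
      by metis
    have "\<not> inj f"
    proof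
      assume "inj f"
      then have "infinite (range f)" using finite_imageD infinite_UNIV_nat by blast
      moreover have "range f \<subseteq> Pairs" using f by auto
      ultimately show False using finP finite_subset by blast
    qed
    then obtain c1 c2 where c12: "c1 \<noteq> c2" "f c1 = f c2" unfolding inj_def by blast
    define i where "i = fst (f c1)"
    define j where "j = snd (f c1)"
    have b1: "\<beta> c1 i j \<in> Cs" using f(2)[of c1] by (simp add: i_def j_def)
    have b2: "\<beta> c2 i j \<in> Cs" using f(2)[of c2] c12 by (simp add: i_def j_def)
    have ijn: "i < n" using f(1)[of c1] by (auto simp: Pairs_def i_def j_def)
    have dne: "(of_nat c1 - of_nat c2 :: 'a) \<noteq> 0" using c12 by simp
    have prodC: "\<alpha> i * \<alpha> j \<in> Cs"
    proof -
      have "\<beta> c1 i j - \<beta> c2 i j = to_ac (of_nat c1 - of_nat c2) * (\<alpha> i * \<alpha> j)"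
        by (simp add: \<beta>_def algebra_simps)
      then have "\<alpha> i * \<alpha> j = to_ac (1 / (of_nat c1 - of_nat c2)) * (\<beta> c1 i j - \<beta> c2 i j)"
        using dne by (simp add: field_simps)
      then show ?thesis using b1 b2 by (metis Cs_mult Cs_diff Cs_to_ac)
    qed
    have sumC: "\<alpha> i + \<alpha> j \<in> Cs"
    proof -
      have "\<alpha> i + \<alpha> j = \<beta> c1 i j - of_nat c1 * (\<alpha> i * \<alpha> j)"
        by (simp add: \<beta>_def algebra_simps)
      then show ?thesis using b1 prodC by (metis Cs_mult Cs_diff Cs_of_nat)
    qed
    have "\<alpha> i * \<alpha> i - (\<alpha> i + \<alpha> j) * \<alpha> i + \<alpha> i * \<alpha> j = 0"
      by (simp add: algebra_simps)
    then have "\<alpha> i \<in> Cs" by (rule Cs_quad[OF sumC prodC])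
    then show ?case using root[OF ijn] by blast
  qed
qed


lemma ivt_sgn:
  fixes p :: "'a::real_closed_field poly"
  assumes "u \<le> v" "\<And>x. u \<le> x \<Longrightarrow> x \<le> v \<Longrightarrow> poly p x \<noteq> 0"
  shows "sgn (poly p u) = sgn (poly p v)"
  using assms
proof (induction "degree p" arbitrary: p rule: less_induct)
  case less
  show ?case
  proof (cases "degree p = 0")
    case True
    then obtain c where "p = [:c:]" by (meson degree_eq_zeroE)
    then show ?thesis by simp
  next
    case False
    then obtain z where z: "z \<in> Cs" "poly (mp p) z = 0" using fta_Cs by blast
    obtain s t where zst: "z = to_ac s + ii * to_ac t" using z(1) by (rule CsE)
    show ?thesis
    proof (cases "t = 0")
      case True
      then have "to_ac (poly p s) = 0" using z zst by simp
      then have "poly p s = 0" by simp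
      then obtain d where d: "p = [:-s, 1:] * d" by (meson dvdE poly_eq_0_iff_dvd)
      have d0: "d \<noteq> 0" using d False by auto
      have degd: "degree d < degree p" using d d0 by (simp add: degree_mult_eq del: mult_pCons_left)
      have pd: "poly p x = (x - s) * poly d x" for x by (subst d) (simp add: algebra_simps)
      have dn: "poly d x \<noteq> 0" if "u \<le> x" "x \<le> v" for x using less.prems(2)[OF that] pd by auto
      have IH: "sgn (poly d u) = sgn (poly d v)" by (rule less.hyps[OF degd less.prems(1) dn])
      have "s < u \<or> s > v" using less.prems \<open>poly p s = 0\<close> by (meson not_le)
      then have "sgn (u - s) = sgn (v - s)" using less.prems(1) by auto
      then show ?thesis using IH by (simp add: pd sgn_mult)
    next
      case t0: False
      define q where "q = [:s * s + t * t, - 2 * s, 1:]"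
      have q0: "q \<noteq> 0" by (simp add: q_def)
      have degq: "degree q = 2" by (simp add: q_def)
      define r where "r = p mod q"
      define d where "d = p div q"
      have pdr: "p = d * q + r" by (simp add: d_def r_def)
      have cr: "coeff r k = 0" if "k \<ge> 2" for k
      proof (cases "r = 0")
        case False
        then have "degree r < 2" using degree_mod_less'[OF q0] degq by (simp add: r_def)
        then show ?thesis using that by (simp add: coeff_eq_0)
      qed simp
      have rform: "r = [:coeff r 0, coeff r 1:]"
        by (rule poly_eqI) (auto simp: coeff_pCons cr split: nat.split)
      have qz: "poly (mp q) z = 0"
      proof -
        have "poly (mp q) z = (z - to_ac s) * (z - to_ac s) + to_ac t * to_ac t"
          by (simp add: q_def algebra_simps)
        also have "\<dots> = (ii * ii) * (to_ac t * to_ac t) + to_ac t * to_ac t"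
          by (simp add: zst algebra_simps)
        finally show ?thesis by (simp add: ii_sq)
      qed
      have "poly (mp r) z = 0" using z(2) qz by (subst (asm) pdr) simp
      then have "to_ac (coeff r 0) + to_ac (coeff r 1) * z = 0"
        by (subst (asm) rform) (simp add: algebra_simps)
      then have "to_ac (coeff r 0 + coeff r 1 * s) + ii * to_ac (coeff r 1 * t) = 0"
        by (simp add: zst algebra_simps)
      then have "coeff r 1 * t = 0" by (rule Cs_indep)
      then have r1: "coeff r 1 = 0" using t0 by simp
      then have "to_ac (coeff r 0) + ii * to_ac 0 = 0"
        using \<open>to_ac (coeff r 0) + to_ac (coeff r 1) * z = 0\<close> by simp
      then have "coeff r 0 = 0" by simp
      then have "r = 0" using r1 rform by simp
      then have pdq: "p = d * q" using pdr by simp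
      have d0: "d \<noteq> 0" using pdq False by auto
      have degd: "degree d < degree p" using pdq d0 q0 degq by (simp add: degree_mult_eq)
      have qpos: "poly q x > 0" for x
      proof -
        have "poly q x = (x - s) * (x - s) + t * t" by (simp add: q_def algebra_simps)
        moreover have "t * t > 0" using t0 by (auto simp: zero_less_mult_iff linorder_neq_iff)
        moreover have "(x - s) * (x - s) \<ge> 0" by simp
        ultimately show ?thesis by linarith
      qed
      have pd: "poly p x = poly d x * poly q x" for x by (subst pdq) simp
      have dn: "poly d x \<noteq> 0" if "u \<le> x" "x \<le> v" for x using less.prems(2)[OF that] pd by auto
      have IH: "sgn (poly d u) = sgn (poly d v)" by (rule less.hyps[OF degd less.prems(1) dn])
      show ?thesis using IH qpos[of u] qpos[of v] by (simp add: pd sgn_mult)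
    qed
  qed
qed


section \<open>Valuation data\<close>

lemma cofac_decomp:
  fixes A :: "'a::field poly"
  assumes "A \<noteq> 0"
  shows "A = [:-x, 1:] ^ order x A * cofac x A" "poly (cofac x A) x \<noteq> 0"
proof -
  obtain C where C: "A = [:-x, 1:] ^ order x A * C" using order_1[of x A] by (meson dvdE)
  have M0: "[:-x, 1:] ^ order x A \<noteq> 0" by simp
  have "cofac x A = C" unfolding cofac_def using M0 by (subst C) simp
  then show "A = [:-x, 1:] ^ order x A * cofac x A" using C by simp
  show "poly (cofac x A) x \<noteq> 0"
  proof
    assume "poly (cofac x A) x = 0"
    then obtain E where "C = [:-x, 1:] * E" using \<open>cofac x A = C\<close> by (metis dvdE poly_eq_0_iff_dvd)
    then have "A = [:-x, 1:] ^ Suc (order x A) * E" using C by (simp only: power_Suc2 mult.assoc)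
    then have "[:-x, 1:] ^ Suc (order x A) dvd A" by (rule dvdI)
    then show False using order_2[OF assms] by blast
  qed
qed

lemma cofac_unique:
  fixes A C :: "'a::field poly"
  assumes "A = [:-x, 1:] ^ n * C" "poly C x \<noteq> 0"
  shows "order x A = n" "cofac x A = C"
proof -
  have "[:-x, 1:] ^ n dvd A" using assms(1) by simp
  moreover have "\<not> [:-x, 1:] ^ Suc n dvd A"
  proof
    assume "[:-x, 1:] ^ Suc n dvd A"
    then obtain E where "A = [:-x, 1:] ^ Suc n * E" by (meson dvdE)
    then have "[:-x, 1:] ^ n * C = [:-x, 1:] ^ n * ([:-x, 1:] * E)" using assms(1) by (simp add: algebra_simps)
    then have "C = [:-x, 1:] * E" by simp
    then show False using assms(2) by simp
  qed
  ultimately show on: "order x A = n" by (rule order_unique_lemma)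
  show "cofac x A = C" unfolding cofac_def on by (subst assms(1)) simp
qed

definition cr :: "'a::field \<Rightarrow> 'a poly \<Rightarrow> 'a" where "cr x A = poly (cofac x A) x"
definition cv :: "bool \<Rightarrow> 'a::field \<Rightarrow> 'a poly \<Rightarrow> 'a" where
  "cv b x A = (if b then 1 else (-1) ^ order x A) * cr x A"

lemma cr_nz: "A \<noteq> 0 \<Longrightarrow> cr x A \<noteq> 0"
  using cofac_decomp(2) by (simp add: cr_def)
lemma cv_nz: "A \<noteq> 0 \<Longrightarrow> cv b x A \<noteq> 0"
  using cr_nz by (simp add: cv_def)

lemma mult_data:
  fixes A B :: "'a::field poly"
  assumes "A \<noteq> 0" "B \<noteq> 0"
  shows "order x (A * B) = order x A + order x B" "cv b x (A * B) = cv b x A * cv b x B"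
proof -
  have e: "A * B = [:-x, 1:] ^ (order x A + order x B) * (cofac x A * cofac x B)"
    using cofac_decomp(1)[OF assms(1), of x] cofac_decomp(1)[OF assms(2), of x]
    by (metis (no_types, lifting) mult.assoc mult.left_commute power_add)
  have nz: "poly (cofac x A * cofac x B) x \<noteq> 0"
    using cofac_decomp(2)[OF assms(1)] cofac_decomp(2)[OF assms(2)] by simp
  show o: "order x (A * B) = order x A + order x B" by (rule cofac_unique(1)[OF e nz])
  have "cofac x (A * B) = cofac x A * cofac x B" by (rule cofac_unique(2)[OF e nz])
  then show "cv b x (A * B) = cv b x A * cv b x B"
    by (simp add: cv_def cr_def o power_add)
qed

lemma sum_lt_data:
  fixes A B :: "'a::field poly"
  assumes "A \<noteq> 0" "B \<noteq> 0" "order x A < order x B"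
  shows "A + B \<noteq> 0" "order x (A + B) = order x A" "cv b x (A + B) = cv b x A"
proof -
  define a where "a = order x A"
  define d where "d = order x B - order x A"
  have bd: "order x B = a + d" "d > 0" using assms(3) by (auto simp: a_def d_def)
  define C where "C = cofac x A + [:-x, 1:] ^ d * cofac x B"
  have e: "A + B = [:-x, 1:] ^ a * C"
    using cofac_decomp(1)[OF assms(1), of x] cofac_decomp(1)[OF assms(2), of x]
    by (simp add: C_def a_def bd power_add algebra_simps)
  have nz: "poly C x \<noteq> 0" using cofac_decomp(2)[OF assms(1)] bd(2) by (simp add: C_def zero_power)
  show "A + B \<noteq> 0" using e nz by auto
  show o: "order x (A + B) = order x A" using cofac_unique(1)[OF e nz] by (simp add: a_def)
  have "cofac x (A + B) = C" by (rule cofac_unique(2)[OF e nz])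
  then show "cv b x (A + B) = cv b x A" using bd(2) by (simp add: cv_def cr_def o C_def)
qed

lemma sum_eq_data:
  fixes A B :: "'a::field poly"
  assumes "A \<noteq> 0" "B \<noteq> 0" "order x A = order x B"
  shows "cv b x A + cv b x B \<noteq> 0 \<Longrightarrow> A + B \<noteq> 0 \<and> order x (A + B) = order x A \<and> cv b x (A + B) = cv b x A + cv b x B"
    and "cv b x A + cv b x B = 0 \<Longrightarrow> A + B \<noteq> 0 \<Longrightarrow> order x (A + B) > order x A"
proof -
  define a where "a = order x A"
  define C where "C = cofac x A + cofac x B"
  have e: "A + B = [:-x, 1:] ^ a * C"
    using cofac_decomp(1)[OF assms(1), of x] cofac_decomp(1)[OF assms(2), of x] assms(3)
    by (simp add: C_def a_def algebra_simps)
  have sgnf: "cv b x A + cv b x B = (if b then 1 else (-1) ^ a) * poly C x"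
    by (simp add: cv_def cr_def C_def a_def assms(3) algebra_simps)
  {
    assume "cv b x A + cv b x B \<noteq> 0"
    then have nz: "poly C x \<noteq> 0" using sgnf by auto
    have o: "order x (A + B) = order x A" using cofac_unique(1)[OF e nz] by (simp add: a_def)
    have "cofac x (A + B) = C" by (rule cofac_unique(2)[OF e nz])
    then have "cv b x (A + B) = cv b x A + cv b x B" using sgnf by (simp add: cv_def cr_def o a_def)
    then show "A + B \<noteq> 0 \<and> order x (A + B) = order x A \<and> cv b x (A + B) = cv b x A + cv b x B"
      using e nz o by auto
  }
  {
    assume z: "cv b x A + cv b x B = 0" and nz: "A + B \<noteq> 0"
    then have "poly C x = 0" using sgnf by (auto split: if_splits)
    then obtain E where "C = [:-x, 1:] * E" by (metis dvdE poly_eq_0_iff_dvd)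
    then have "A + B = [:-x, 1:] ^ Suc a * E" using e by (simp only: power_Suc2 mult.assoc)
    then have "[:-x, 1:] ^ Suc a dvd A + B" by (rule dvdI)
    then have "Suc a \<le> order x (A + B)" using nz order_divides[of x "Suc a" "A + B"] by blast
    then show "order x (A + B) > order x A" by (simp add: a_def)
  }
qed


lemma sgn_pm: "(x::'a::linordered_field) \<noteq> 0 \<Longrightarrow> sgn x = 1 \<or> sgn x = -1"
  by (auto simp: sgn_if)

lemma sgn_add_same:
  fixes a b :: "'a::linordered_field"
  assumes "sgn a = sgn b" "a \<noteq> 0"
  shows "sgn (a + b) = sgn a"
  using assms by (auto simp: sgn_if split: if_splits)

lemma local_abs:
  fixes u v w z e1 e2 :: "'a::linordered_field" and p q r s h1 h2 :: nat and H1z :: bool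
  assumes nz: "u \<noteq> 0" "v \<noteq> 0" "w \<noteq> 0" "z \<noteq> 0" "e2 \<noteq> 0"
    and R2a: "p + s < q + r \<Longrightarrow> h2 = p + s \<and> e2 = u * z"
    and R2b: "q + r < p + s \<Longrightarrow> h2 = q + r \<and> e2 = v * w"
    and R2c: "p + s = q + r \<Longrightarrow> u * z + v * w \<noteq> 0 \<Longrightarrow> h2 = p + s \<and> e2 = u * z + v * w"
    and R2d: "p + s = q + r \<Longrightarrow> u * z + v * w = 0 \<Longrightarrow> h2 > p + s"
    and R1a: "\<not> H1z \<Longrightarrow> p + r < q + s \<Longrightarrow> h1 = p + r \<and> e1 = u * w"
    and R1b: "\<not> H1z \<Longrightarrow> q + s < p + r \<Longrightarrow> h1 = q + s \<and> e1 = - (v * z)"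
    and R1c: "\<not> H1z \<Longrightarrow> p + r = q + s \<Longrightarrow> u * w + - (v * z) \<noteq> 0 \<Longrightarrow> h1 = p + r \<and> e1 = u * w + - (v * z)"
    and R1d: "\<not> H1z \<Longrightarrow> p + r = q + s \<Longrightarrow> u * w + - (v * z) = 0 \<Longrightarrow> h1 > p + r"
    and H1zc: "H1z \<Longrightarrow> p + r = q + s \<and> u * w + - (v * z) = 0"
  shows "(if \<not> H1z \<and> h1 < h2 then sgn (e1 * e2) / 2 else 0)
         - (if p < q then sgn (u * v) / 2 else 0) - (if r < s then sgn (w * z) / 2 else 0)
       = - sgn (e2 * (v * z)) / 2
         + (if h2 = q + s \<and> \<not> (int p - int q = int r - int s \<and> p < q) then sgn (e2 * (v * z)) / 2 else 0)"
proof -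
  note S = sgn_pm[OF nz(1)] sgn_pm[OF nz(2)] sgn_pm[OF nz(3)] sgn_pm[OF nz(4)]
  consider (A) "p + s < q + r" | (B) "q + r < p + s" | (C) "p + s = q + r" by linarith
  then show ?thesis
  proof cases
    case A
    note h2 = R2a[OF A]
    consider (A1) "p + r < q + s" | (A2) "q + s < p + r" | (A3) "p + r = q + s" by linarith
    then show ?thesis
    proof cases
      case A1
      have n1: "\<not> H1z" using H1zc A1 by auto
      note h1 = R1a[OF n1 A1]
      have "p < q" "h2 \<noteq> q + s" using A A1 h2 by auto
      then show ?thesis using S h1 h2 n1 by (auto simp: sgn_mult)
    next
      case A2
      have n1: "\<not> H1z" using H1zc A2 by auto
      note h1 = R1b[OF n1 A2]
      have "\<not> r < s" using A A2 by auto
      then show ?thesis using S h1 h2 n1 by (auto simp: sgn_mult)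
    next
      case A3
      have "p < q" "\<not> r < s" "h2 \<noteq> q + s" using A A3 h2 by auto
      moreover have "\<not> (\<not> H1z \<and> h1 < h2)"
      proof
        assume a: "\<not> H1z \<and> h1 < h2"
        then have "h1 \<ge> p + r" using R1c[OF _ A3] R1d[OF _ A3] by (cases "u * w + - (v * z) = 0") auto
        then show False using a h2 A A3 by auto
      qed
      ultimately show ?thesis using S h2 by (auto simp: sgn_mult)
    qed
  next
    case B
    note h2 = R2b[OF B]
    consider (B1) "p + r < q + s" | (B2) "q + s < p + r" | (B3) "p + r = q + s" by linarith
    then show ?thesis
    proof cases
      case B1
      have n1: "\<not> H1z" using H1zc B1 by auto
      note h1 = R1a[OF n1 B1]
      have "r < s" "h2 \<noteq> q + s" using B B1 h2 by auto
      then show ?thesis using S h1 h2 n1 by (auto simp: sgn_mult)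
    next
      case B2
      have n1: "\<not> H1z" using H1zc B2 by auto
      note h1 = R1b[OF n1 B2]
      have "\<not> p < q" using B B2 by auto
      then show ?thesis using S h1 h2 n1 by (auto simp: sgn_mult)
    next
      case B3
      have "\<not> p < q" "r < s" "h2 \<noteq> q + s" using B B3 h2 by auto
      moreover have "\<not> (\<not> H1z \<and> h1 < h2)"
      proof
        assume a: "\<not> H1z \<and> h1 < h2"
        then have "h1 \<ge> p + r" using R1c[OF _ B3] R1d[OF _ B3] by (cases "u * w + - (v * z) = 0") auto
        then show False using a h2 B B3 by auto
      qed
      ultimately show ?thesis using S h2 by (auto simp: sgn_mult)
    qed
  next
    case C
    have h2ge: "h2 \<ge> p + s" using R2c[OF C] R2d[OF C] by (cases "u * z + v * w = 0") auto
    consider (C1) "p < q" | (C2) "q < p" | (C3) "p = q" by linarith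
    then show ?thesis
    proof cases
      case C1
      have rs: "r < s" and lt: "p + r < q + s" using C C1 by auto
      have n1: "\<not> H1z" using H1zc lt by auto
      note h1 = R1a[OF n1 lt]
      have h12: "h1 < h2" using h1 h2ge rs by auto
      have bad: "int p - int q = int r - int s" using C by linarith
      have key: "sgn e2 * (sgn u * sgn w + sgn v * sgn z) = sgn u * sgn v + sgn w * sgn z"
      proof (cases "sgn (u * z) = sgn (v * w)")
        case True
        have s1: "sgn (u * z + v * w) = sgn (u * z)" using sgn_add_same[OF True] nz by simp
        then have "u * z + v * w \<noteq> 0" "sgn (u * z + v * w) = sgn (u * z)"
          using nz by (auto simp: sgn_eq_0_iff)
        then have "sgn e2 = sgn u * sgn z" using R2c[OF C] by (simp add: sgn_mult)
        then show ?thesis using S True by (auto simp: sgn_mult)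
      next
        case False
        then have "sgn u * sgn w + sgn v * sgn z = 0" "sgn u * sgn v + sgn w * sgn z = 0"
          using S by (auto simp: sgn_mult)
        then show ?thesis by simp
      qed
      have "sgn (e1 * e2) / 2 - sgn (u * v) / 2 - sgn (w * z) / 2 = - sgn (e2 * (v * z)) / 2"
      proof -
        have "sgn (e1 * e2) + sgn (e2 * (v * z)) = sgn e2 * (sgn u * sgn w + sgn v * sgn z)"
          using h1 by (simp add: sgn_mult algebra_simps)
        then show ?thesis using key by (simp add: sgn_mult field_simps)
      qed
      then show ?thesis using C1 rs n1 h12 bad by auto
    next
      case C2
      have rs: "\<not> r < s" and lt: "q + s < p + r" using C C2 by auto
      have n1: "\<not> H1z" using H1zc lt by auto
      note h1 = R1b[OF n1 lt]
      have h12: "h1 < h2" "h2 \<noteq> q + s" using h1 h2ge C2 by auto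
      then show ?thesis using C2 rs n1 h1 by (auto simp: sgn_mult)
    next
      case C3
      have rs: "r = s" using C C3 by simp
      show ?thesis
      proof (cases "u * z + v * w = 0")
        case False
        note h2 = R2c[OF C False]
        have "\<not> (\<not> H1z \<and> h1 < h2)"
        proof
          assume a: "\<not> H1z \<and> h1 < h2"
          have eqo: "p + r = q + s" using C3 rs by simp
          have "h1 \<ge> p + r" using R1c[OF _ eqo] R1d[OF _ eqo] a by (cases "u * w + - (v * z) = 0") auto
          then show False using a h2 C3 rs by auto
        qed
        then show ?thesis using C3 rs h2 by auto
      next
        case True
        have h2gt: "h2 > p + s" by (rule R2d[OF C True])
        have eqo: "p + r = q + s" using C3 rs by simp
        have uz: "u * z = - (v * w)" using True by (simp add: eq_neg_iff_add_eq_0)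
        have "(u * w + - (v * z)) * z = (u * z) * w - v * (z * z)"
          by (simp add: algebra_simps)
        also have "\<dots> = - v * (w * w + z * z)"
          by (simp only: uz) (simp add: algebra_simps)
        finally have "(u * w + - (v * z)) * z = - v * (w * w + z * z)" .
        moreover have "w * w + z * z > 0" using nz by (simp add: sum_squares_gt_zero_iff)
        ultimately have sz: "sgn (u * w + - (v * z)) * sgn z = - sgn v"
          by (simp add: sgn_mult[symmetric] sgn_mult)
        have ne: "u * w + - (v * z) \<noteq> 0" using sz nz by (auto simp: sgn_eq_0_iff)
        have n1: "\<not> H1z" using H1zc ne by auto
        note h1 = R1c[OF n1 eqo ne]
        have h12: "h1 < h2" using h1 h2gt rs by auto
        have "sgn e1 = - sgn v * sgn z"
          using sz h1 S by (auto simp: sgn_mult)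
        then show ?thesis using h12 n1 C3 rs h2gt by (auto simp: sgn_mult)
      qed
    qed
  qed
qed


lemma neg_data:
  fixes A :: "'a::field poly"
  assumes "A \<noteq> 0"
  shows "order x (- A) = order x A" "cv b x (- A) = - cv b x A"
proof -
  have e: "- A = [:-x, 1:] ^ order x A * (- cofac x A)"
    using cofac_decomp(1)[OF assms, of x] by (metis mult_minus_right)
  have nz: "poly (- cofac x A) x \<noteq> 0" using cofac_decomp(2)[OF assms] by simp
  show o: "order x (- A) = order x A" by (rule cofac_unique(1)[OF e nz])
  have "cofac x (- A) = - cofac x A" by (rule cofac_unique(2)[OF e nz])
  then show "cv b x (- A) = - cv b x A" by (simp add: cv_def cr_def o)
qed

lemma minus_one_powi:
  assumes "a < b"
  shows "((-1::'a::linordered_field) powi (int a - int b)) = (-1) ^ a * (-1) ^ b"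
proof -
  have eq: "int a - int b = - int (b - a)" using assms by simp
  have "((-1::'a) powi (int a - int b)) = (-1) powi (- int (b - a))" by (simp only: eq)
  also have "\<dots> = inverse ((-1) powi int (b - a))" by (rule power_int_minus)
  also have "(-1::'a) powi int (b - a) = (-1) ^ (b - a)" by (rule power_int_of_nat)
  also have "inverse ((-1::'a) ^ (b - a)) = (-1) ^ (b - a)" by (cases "even (b - a)") simp_all
  also have "(-1::'a) ^ (b - a) = (-1) ^ a * (-1) ^ b"
  proof -
    have ab: "a + b = (b - a) + 2 * a" using assms by simp
    have "(-1::'a) ^ a * (-1) ^ b = (-1) ^ (a + b)" by (simp only: power_add)
    also have "\<dots> = (-1) ^ (b - a) * ((-1) ^ 2) ^ a" by (simp only: ab power_add power_mult)
    also have "\<dots> = (-1) ^ (b - a)" by simp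
    finally show ?thesis by simp
  qed
  finally show ?thesis .
qed

lemma sgn_m1_pow: "sgn ((-1::'a::linordered_field) ^ n * t) = (-1) ^ n * sgn t"
  by (simp add: sgn_mult power_sgn)

definition Ind_side :: "bool \<Rightarrow> 'a::linordered_field \<Rightarrow> 'a poly \<Rightarrow> 'a poly \<Rightarrow> 'a" where
  "Ind_side b = (if b then Ind_plus else Ind_minus)"

lemma Ind_side_cv:
  "Ind_side b x A B = (if A \<noteq> 0 \<and> B \<noteq> 0 \<and> order x A < order x B
      then sgn (cv b x A * cv b x B) / 2 else 0)"
proof (cases b)
  case True
  then show ?thesis
    by (simp add: Ind_side_def Ind_plus_def valx_def cv_def cr_def)
next
  case False
  show ?thesis
  proof (cases "A \<noteq> 0 \<and> B \<noteq> 0 \<and> order x A < order x B")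
    case c: True
    then have "valx x A B < 0" by (simp add: valx_def)
    then have "Ind_minus x A B = (-1) ^ order x A * (-1) ^ order x B *
        sgn (poly (cofac x A) x * poly (cofac x B) x) / 2"
      using c by (simp add: Ind_minus_def valx_def minus_one_powi)
    also have "\<dots> = sgn (cv False x A * cv False x B) / 2"
      by (simp add: cv_def cr_def sgn_mult power_sgn algebra_simps)
    finally show ?thesis using False c by (simp add: Ind_side_def)
  next
    case c: False
    then show ?thesis using False by (auto simp: Ind_side_def Ind_minus_def valx_def)
  qed
qed

lemma Sign_cv:
  assumes "A \<noteq> 0" "B \<noteq> 0"
  shows "Sign A B x = (if order x A = order x B then sgn (cv b x A * cv b x B) else 0)"
proof -
  have "(-1::'a) ^ order x A * (-1) ^ order x A = 1" by (simp add: power_add[symmetric])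
  then show ?thesis using assms
    by (auto simp: Sign_def valx_def cv_def cr_def sgn_mult power_sgn algebra_simps)
qed

lemma local_poly:
  fixes P Q R S :: "'a::linordered_field poly"
  assumes nz: "P \<noteq> 0" "Q \<noteq> 0" "R \<noteq> 0" "S \<noteq> 0" "P * S + Q * R \<noteq> 0"
  shows "Ind_side b x (P * R - Q * S) (P * S + Q * R) - Ind_side b x P Q - Ind_side b x R S
    = - sgn (cv b x ((P * S + Q * R) * (Q * S))) / 2
      + (if bad x P Q R S then 0 else Sign (P * S + Q * R) (Q * S) x / 2)"
proof -
  define H1 where "H1 = P * R - Q * S"
  define H2 where "H2 = P * S + Q * R"
  define p where "p = order x P"
  define q where "q = order x Q"
  define r where "r = order x R"
  define s where "s = order x S"
  define u where "u = cv b x P"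
  define v where "v = cv b x Q"
  define w where "w = cv b x R"
  define z where "z = cv b x S"
  define h1 where "h1 = order x H1"
  define h2 where "h2 = order x H2"
  define e1 where "e1 = cv b x H1"
  define e2 where "e2 = cv b x H2"
  have H20: "H2 \<noteq> 0" using nz by (simp add: H2_def)
  have nzv: "u \<noteq> 0" "v \<noteq> 0" "w \<noteq> 0" "z \<noteq> 0" "e2 \<noteq> 0"
    using nz H20 by (simp_all add: u_def v_def w_def z_def e2_def cv_nz)
  have PS: "P * S \<noteq> 0" "order x (P * S) = p + s" "cv b x (P * S) = u * z"
    using nz mult_data(1)[of P S x] mult_data(2)[of P S b x] by (simp_all add: p_def s_def u_def z_def)
  have QR: "Q * R \<noteq> 0" "order x (Q * R) = q + r" "cv b x (Q * R) = v * w"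
    using nz mult_data(1)[of Q R x] mult_data(2)[of Q R b x] by (simp_all add: q_def r_def v_def w_def)
  have PR: "P * R \<noteq> 0" "order x (P * R) = p + r" "cv b x (P * R) = u * w"
    using nz mult_data(1)[of P R x] mult_data(2)[of P R b x] by (simp_all add: p_def r_def u_def w_def)
  have QS0: "Q * S \<noteq> 0" "order x (Q * S) = q + s" "cv b x (Q * S) = v * z"
    using nz mult_data(1)[of Q S x] mult_data(2)[of Q S b x] by (simp_all add: q_def s_def v_def z_def)
  have mQS: "- (Q * S) \<noteq> 0" "order x (- (Q * S)) = q + s" "cv b x (- (Q * S)) = - (v * z)"
    using QS0 neg_data(1)[of "Q * S" x] neg_data(2)[of "Q * S" b x] by simp_all
  have H1e: "H1 = P * R + - (Q * S)" by (simp add: H1_def)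
  have H2e': "H2 = Q * R + P * S" unfolding H2_def by (rule add.commute)
  have R2a: "p + s < q + r \<Longrightarrow> h2 = p + s \<and> e2 = u * z"
  proof -
    assume lt: "p + s < q + r"
    have o: "order x (P * S) < order x (Q * R)" using lt PS(2) QR(2) by simp
    show ?thesis using sum_lt_data(2)[OF PS(1) QR(1) o] sum_lt_data(3)[OF PS(1) QR(1) o, of b] PS(2,3)
      unfolding h2_def e2_def H2_def by simp
  qed
  have R2b: "q + r < p + s \<Longrightarrow> h2 = q + r \<and> e2 = v * w"
  proof -
    assume lt: "q + r < p + s"
    have o: "order x (Q * R) < order x (P * S)" using lt PS(2) QR(2) by simp
    show ?thesis using sum_lt_data(2)[OF QR(1) PS(1) o] sum_lt_data(3)[OF QR(1) PS(1) o, of b] QR(2,3)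
      unfolding h2_def e2_def H2e' by simp
  qed
  have R2c: "p + s = q + r \<Longrightarrow> u * z + v * w \<noteq> 0 \<Longrightarrow> h2 = p + s \<and> e2 = u * z + v * w"
  proof -
    assume eq: "p + s = q + r" and ne: "u * z + v * w \<noteq> 0"
    have o: "order x (P * S) = order x (Q * R)" using eq PS(2) QR(2) by simp
    have ne': "cv b x (P * S) + cv b x (Q * R) \<noteq> 0" using ne PS(3) QR(3) by simp
    show ?thesis using sum_eq_data(1)[OF PS(1) QR(1) o ne'] PS(2,3) QR(3)
      unfolding h2_def e2_def H2_def by simp
  qed
  have R2d: "p + s = q + r \<Longrightarrow> u * z + v * w = 0 \<Longrightarrow> h2 > p + s"
  proof -
    assume eq: "p + s = q + r" and ze: "u * z + v * w = 0"
    have o: "order x (P * S) = order x (Q * R)" using eq PS(2) QR(2) by simp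
    have ze': "cv b x (P * S) + cv b x (Q * R) = 0" using ze PS(3) QR(3) by simp
    have "P * S + Q * R \<noteq> 0" using H20 by (simp add: H2_def)
    from sum_eq_data(2)[OF PS(1) QR(1) o ze' this] show ?thesis
      using PS(2) unfolding h2_def H2_def by simp
  qed
  have R1a: "H1 \<noteq> 0 \<Longrightarrow> p + r < q + s \<Longrightarrow> h1 = p + r \<and> e1 = u * w"
  proof -
    assume lt: "p + r < q + s"
    have o: "order x (P * R) < order x (- (Q * S))" using lt PR(2) mQS(2) by simp
    show ?thesis using sum_lt_data(2)[OF PR(1) mQS(1) o] sum_lt_data(3)[OF PR(1) mQS(1) o, of b] PR(2,3)
      unfolding h1_def e1_def H1e by simp
  qed
  have R1b: "H1 \<noteq> 0 \<Longrightarrow> q + s < p + r \<Longrightarrow> h1 = q + s \<and> e1 = - (v * z)"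
  proof -
    assume lt: "q + s < p + r"
    have o: "order x (- (Q * S)) < order x (P * R)" using lt PR(2) mQS(2) by simp
    have H1e': "H1 = - (Q * S) + P * R" using H1e by (simp only: add.commute)
    show ?thesis using sum_lt_data(2)[OF mQS(1) PR(1) o] sum_lt_data(3)[OF mQS(1) PR(1) o, of b] mQS(2,3)
      unfolding h1_def e1_def H1e' by simp
  qed
  have R1c: "H1 \<noteq> 0 \<Longrightarrow> p + r = q + s \<Longrightarrow> u * w + - (v * z) \<noteq> 0 \<Longrightarrow> h1 = p + r \<and> e1 = u * w + - (v * z)"
  proof -
    assume eq: "p + r = q + s" and ne: "u * w + - (v * z) \<noteq> 0"
    have o: "order x (P * R) = order x (- (Q * S))" using eq PR(2) mQS(2) by simp
    have ne': "cv b x (P * R) + cv b x (- (Q * S)) \<noteq> 0" using ne PR(3) mQS(3) by simp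
    show ?thesis using sum_eq_data(1)[OF PR(1) mQS(1) o ne'] PR(2,3) mQS(3)
      unfolding h1_def e1_def H1e by simp
  qed
  have R1d: "H1 \<noteq> 0 \<Longrightarrow> p + r = q + s \<Longrightarrow> u * w + - (v * z) = 0 \<Longrightarrow> h1 > p + r"
  proof -
    assume nz1: "H1 \<noteq> 0" and eq: "p + r = q + s" and ze: "u * w + - (v * z) = 0"
    have o: "order x (P * R) = order x (- (Q * S))" using eq PR(2) mQS(2) by simp
    have ze': "cv b x (P * R) + cv b x (- (Q * S)) = 0" using ze PR(3) mQS(3) by simp
    have "P * R + - (Q * S) \<noteq> 0" using nz1 H1e by simp
    from sum_eq_data(2)[OF PR(1) mQS(1) o ze' this] show ?thesis
      using PR(2) unfolding h1_def H1e by simp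
  qed
  have H1zc: "H1 = 0 \<Longrightarrow> p + r = q + s \<and> u * w + - (v * z) = 0"
  proof -
    assume "H1 = 0"
    then have "P * R = Q * S" by (simp add: H1_def)
    then have e: "P * R = Q * S" .
    have "p + r = q + s" using PR(2) QS0(2) e by simp
    moreover have "u * w = v * z" using PR(3) QS0(3) e by simp
    ultimately show ?thesis by simp
  qed
  note abs = local_abs[OF nzv R2a R2b R2c R2d R1a R1b R1c R1d H1zc]
  have I1: "Ind_side b x H1 H2 = (if \<not> H1 = 0 \<and> h1 < h2 then sgn (e1 * e2) / 2 else 0)"
    using H20 by (simp add: Ind_side_cv h1_def h2_def e1_def e2_def)
  have I2: "Ind_side b x P Q = (if p < q then sgn (u * v) / 2 else 0)"
    using nz by (simp add: Ind_side_cv p_def q_def u_def v_def)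
  have I3: "Ind_side b x R S = (if r < s then sgn (w * z) / 2 else 0)"
    using nz by (simp add: Ind_side_cv r_def s_def w_def z_def)
  have W: "cv b x (H2 * (Q * S)) = e2 * (v * z)"
    using mult_data(2)[OF H20 QS0(1), of b x] QS0 by (simp add: e2_def)
  have Sg: "Sign H2 (Q * S) x = (if h2 = q + s then sgn (e2 * (v * z)) else 0)"
    using Sign_cv[OF H20 QS0(1), of x b] QS0 by (simp add: h2_def e2_def)
  have bd: "bad x P Q R S \<longleftrightarrow> (int p - int q = int r - int s \<and> p < q \<and> h2 = q + s)"
    using nz H20 QS0 by (auto simp: bad_def valx_def p_def q_def r_def s_def h2_def H2_def)
  have "Ind_side b x (P * R - Q * S) (P * S + Q * R) - Ind_side b x P Q - Ind_side b x R S
     = (if \<not> H1 = 0 \<and> h1 < h2 then sgn (e1 * e2) / 2 else 0)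
         - (if p < q then sgn (u * v) / 2 else 0) - (if r < s then sgn (w * z) / 2 else 0)"
    using I1 I2 I3 by (simp only: H1_def H2_def)
  also have "\<dots> = - sgn (e2 * (v * z)) / 2
         + (if h2 = q + s \<and> \<not> (int p - int q = int r - int s \<and> p < q) then sgn (e2 * (v * z)) / 2 else 0)"
    by (rule abs)
  also have "\<dots> = - sgn (cv b x (H2 * (Q * S))) / 2
      + (if bad x P Q R S then 0 else Sign H2 (Q * S) x / 2)"
    unfolding W Sg bd by auto
  finally show ?thesis by (simp only: H2_def)
qed


lemma noroots_sgn:
  fixes W :: "'a::real_closed_field poly"
  assumes W0: "W \<noteq> 0" and ab: "a < b" and nr: "\<And>x. a < x \<Longrightarrow> x < b \<Longrightarrow> poly W x \<noteq> 0"
  shows "sgn (cv True a W) = sgn (cv False b W)"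
proof -
  define t where "t = (a + b) / 2"
  have t: "a < t" "t < b" using ab by (simp_all add: t_def field_simps)
  define ma where "ma = order a W"
  define Ca where "Ca = cofac a W"
  have Wa: "W = [:-a, 1:] ^ ma * Ca" "poly Ca a \<noteq> 0"
    using cofac_decomp[OF W0, of a] by (simp_all add: ma_def Ca_def)
  have pWa: "poly W y = (y - a) ^ ma * poly Ca y" for y by (subst Wa(1)) (simp add: poly_power)
  have Ca_nz: "poly Ca y \<noteq> 0" if "a \<le> y" "y \<le> t" for y
  proof (cases "y = a")
    case True then show ?thesis using Wa(2) by simp
  next
    case False
    then have "a < y" "y < b" using that t by auto
    then show ?thesis using nr pWa by fastforce
  qed
  have sa: "sgn (poly Ca a) = sgn (poly Ca t)" by (rule ivt_sgn) (use t Ca_nz in auto)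
  have st: "sgn (poly W t) = sgn (poly Ca t)"
    using t by (simp add: pWa sgn_mult power_sgn)
  define mb where "mb = order b W"
  define Cb where "Cb = cofac b W"
  have Wb: "W = [:-b, 1:] ^ mb * Cb" "poly Cb b \<noteq> 0"
    using cofac_decomp[OF W0, of b] by (simp_all add: mb_def Cb_def)
  have pWb: "poly W y = (y - b) ^ mb * poly Cb y" for y by (subst Wb(1)) (simp add: poly_power)
  have Cb_nz: "poly Cb y \<noteq> 0" if "t \<le> y" "y \<le> b" for y
  proof (cases "y = b")
    case True then show ?thesis using Wb(2) by simp
  next
    case False
    then have "a < y" "y < b" using that t by auto
    then show ?thesis using nr pWb by fastforce
  qed
  have sb: "sgn (poly Cb t) = sgn (poly Cb b)" by (rule ivt_sgn) (use t Cb_nz in auto)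
  have "sgn (t - b) = -1" using t by simp
  then have st2: "sgn (poly W t) = (-1) ^ mb * sgn (poly Cb t)"
    by (simp add: pWb sgn_mult power_sgn)
  have "sgn (cv True a W) = sgn (poly Ca a)" by (simp add: cv_def cr_def Ca_def)
  also have "\<dots> = sgn (poly W t)" using sa st by simp
  also have "\<dots> = (-1) ^ mb * sgn (poly Cb b)" using st2 sb by simp
  also have "\<dots> = sgn (cv False b W)" by (simp add: cv_def cr_def Cb_def mb_def sgn_mult power_sgn)
  finally show ?thesis .
qed

lemma telescope:
  fixes W :: "'a::real_closed_field poly"
  assumes W0: "W \<noteq> 0"
  shows "a < b \<Longrightarrow> (\<Sum>x\<in>{x. a < x \<and> x < b \<and> poly W x = 0}. sgn (cv True x W) - sgn (cv False x W))
    = sgn (cv False b W) - sgn (cv True a W)"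
proof (induction "card {x. a < x \<and> x < b \<and> poly W x = 0}" arbitrary: a b rule: less_induct)
  case less
  define Z where "Z a b = {x. a < x \<and> x < b \<and> poly W x = 0}" for a b
  have finZ: "finite (Z a b)" for a b
    by (rule finite_subset[OF _ poly_roots_finite[OF W0]]) (auto simp: Z_def)
  define f where "f x = sgn (cv True x W) - sgn (cv False x W)" for x
  show ?case
  proof (cases "Z a b = {}")
    case True
    have "sgn (cv True a W) = sgn (cv False b W)"
      by (rule noroots_sgn[OF W0 less.prems]) (use True in \<open>auto simp: Z_def\<close>)
    moreover have emp: "{x. a < x \<and> x < b \<and> poly W x = 0} = {}" using True by (simp only: Z_def)
    ultimately show ?thesis unfolding emp by simp
  next
    case False
    then obtain c where c: "c \<in> Z a b" by blast
    have ac: "a < c" "c < b" using c by (auto simp: Z_def)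
    have split: "Z a b = insert c (Z a c \<union> Z c b)" using c by (auto simp: Z_def)
    have cn: "c \<notin> Z a c \<union> Z c b" by (auto simp: Z_def)
    have disj: "Z a c \<inter> Z c b = {}" by (auto simp: Z_def)
    have lt1: "card (Z a c) < card (Z a b)"
      by (rule psubset_card_mono[OF finZ]) (use split cn in auto)
    have lt2: "card (Z c b) < card (Z a b)"
      by (rule psubset_card_mono[OF finZ]) (use split cn in auto)
    have IH1: "sum f (Z a c) = sgn (cv False c W) - sgn (cv True a W)"
      using less.hyps[OF lt1[unfolded Z_def] ac(1)] by (simp add: Z_def f_def)
    have IH2: "sum f (Z c b) = sgn (cv False b W) - sgn (cv True c W)"
      using less.hyps[OF lt2[unfolded Z_def] ac(2)] by (simp add: Z_def f_def)
    have "sum f (Z a b) = f c + (sum f (Z a c) + sum f (Z c b))"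
      unfolding split using finZ cn disj by (simp add: sum.union_disjoint)
    also have "\<dots> = sgn (cv False b W) - sgn (cv True a W)"
      using IH1 IH2 by (simp add: f_def)
    finally show ?thesis by (simp add: Z_def f_def)
  qed
qed

lemma Ind_at_supp:
  assumes "Ind_at x A B \<noteq> 0"
  shows "B \<noteq> 0 \<and> poly B x = 0"
proof -
  have "A \<noteq> 0 \<and> B \<noteq> 0 \<and> valx x A B < 0"
    using assms by (auto simp: Ind_at_def Ind_plus_def Ind_minus_def split: if_splits)
  then have "B \<noteq> 0" "order x B > 0" by (auto simp: valx_def)
  then show ?thesis by (simp add: order_gt_0_iff)
qed

lemma Ind_ab_X:
  fixes W :: "'a::linordered_field poly"
  assumes W0: "W \<noteq> 0" and dv: "B dvd W"
  shows "Ind_ab a b A B = Ind_plus a A B + (\<Sum>x\<in>{x. a < x \<and> x < b \<and> poly W x = 0}. Ind_at x A B) - Ind_minus b A B"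
proof -
  have "(\<Sum>x\<in>{x. a < x \<and> x < b \<and> Ind_at x A B \<noteq> 0}. Ind_at x A B) =
      (\<Sum>x\<in>{x. a < x \<and> x < b \<and> poly W x = 0}. Ind_at x A B)"
  proof (rule sum.mono_neutral_left)
    show "finite {x. a < x \<and> x < b \<and> poly W x = 0}"
      by (rule finite_subset[OF _ poly_roots_finite[OF W0]]) auto
    show "{x. a < x \<and> x < b \<and> Ind_at x A B \<noteq> 0} \<subseteq> {x. a < x \<and> x < b \<and> poly W x = 0}"
    proof
      fix x assume x: "x \<in> {x. a < x \<and> x < b \<and> Ind_at x A B \<noteq> 0}"
      then have "poly B x = 0" using Ind_at_supp by blast
      moreover obtain K where "W = B * K" using dv by (meson dvdE)
      ultimately show "x \<in> {x. a < x \<and> x < b \<and> poly W x = 0}" using x by simp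
    qed
  qed auto
  then show ?thesis by (simp add: Ind_ab_def)
qed

lemma core:
  fixes P Q R S :: "'a::real_closed_field poly"
  assumes nz: "P \<noteq> 0" "Q \<noteq> 0" "R \<noteq> 0" "S \<noteq> 0" "P * S + Q * R \<noteq> 0" and ab: "a < b"
  shows "Ind_ab a b (P * R - Q * S) (P * S + Q * R) = Ind_ab a b P Q + Ind_ab a b R S
     + (if bad a P Q R S then 0 else Sign (P * S + Q * R) (Q * S) a / 2)
     - (if bad b P Q R S then 0 else Sign (P * S + Q * R) (Q * S) b / 2)"
proof -
  define H1 where "H1 = P * R - Q * S"
  define H2 where "H2 = P * S + Q * R"
  define W where "W = H2 * (Q * S)"
  have W0: "W \<noteq> 0" using nz by (simp add: W_def H2_def)
  define XX where "XX = {x. a < x \<and> x < b \<and> poly W x = 0}"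
  define VV where "VV x = (if bad x P Q R S then 0 else Sign H2 (Q * S) x / 2)" for x
  have loc: "Ind_side bb x H1 H2 - Ind_side bb x P Q - Ind_side bb x R S = - sgn (cv bb x W) / 2 + VV x" for bb x
    using local_poly[OF nz, of bb x] by (simp add: H1_def H2_def W_def VV_def)
  have d1: "H2 dvd W" "Q dvd W" "S dvd W" by (simp_all add: W_def)
  have e1: "Ind_ab a b H1 H2 = Ind_plus a H1 H2 + (\<Sum>x\<in>XX. Ind_at x H1 H2) - Ind_minus b H1 H2"
    unfolding XX_def by (rule Ind_ab_X[OF W0 d1(1)])
  have e2: "Ind_ab a b P Q = Ind_plus a P Q + (\<Sum>x\<in>XX. Ind_at x P Q) - Ind_minus b P Q"
    unfolding XX_def by (rule Ind_ab_X[OF W0 d1(2)])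
  have e3: "Ind_ab a b R S = Ind_plus a R S + (\<Sum>x\<in>XX. Ind_at x R S) - Ind_minus b R S"
    unfolding XX_def by (rule Ind_ab_X[OF W0 d1(3)])
  have pt: "Ind_at x H1 H2 - Ind_at x P Q - Ind_at x R S = - ((sgn (cv True x W) - sgn (cv False x W)) / 2)" for x
    using loc[of True x] loc[of False x] unfolding Ind_at_def Ind_side_def by (simp add: field_simps)
  have tel: "(\<Sum>x\<in>XX. sgn (cv True x W) - sgn (cv False x W)) = sgn (cv False b W) - sgn (cv True a W)"
    unfolding XX_def by (rule telescope[OF W0 ab])
  have "(\<Sum>x\<in>XX. Ind_at x H1 H2) - (\<Sum>x\<in>XX. Ind_at x P Q) - (\<Sum>x\<in>XX. Ind_at x R S)
      = (\<Sum>x\<in>XX. Ind_at x H1 H2 - Ind_at x P Q - Ind_at x R S)"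
    by (simp add: sum_subtractf)
  also have "\<dots> = (\<Sum>x\<in>XX. - ((sgn (cv True x W) - sgn (cv False x W)) / 2))"
    by (simp add: pt)
  also have "\<dots> = - ((\<Sum>x\<in>XX. sgn (cv True x W) - sgn (cv False x W)) / 2)"
    by (simp add: sum_negf sum_divide_distrib)
  finally have sumeq: "(\<Sum>x\<in>XX. Ind_at x H1 H2) - (\<Sum>x\<in>XX. Ind_at x P Q) - (\<Sum>x\<in>XX. Ind_at x R S)
      = - ((sgn (cv False b W) - sgn (cv True a W)) / 2)" using tel by simp
  have pa: "Ind_plus a H1 H2 - Ind_plus a P Q - Ind_plus a R S = - sgn (cv True a W) / 2 + VV a"
    using loc[of True a] by (simp add: Ind_side_def)
  have pb: "Ind_minus b H1 H2 - Ind_minus b P Q - Ind_minus b R S = - sgn (cv False b W) / 2 + VV b"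
    using loc[of False b] by (simp add: Ind_side_def)
  have "Ind_ab a b H1 H2 = Ind_ab a b P Q + Ind_ab a b R S + VV a - VV b"
    using e1 e2 e3 sumeq pa pb by (simp add: field_simps)
  then show ?thesis by (simp add: H1_def H2_def VV_def)
qed

theorem proposition2p4:
  fixes P Q R S :: "'a::real_closed_field poly" and a b :: 'a
  assumes "\<not> (P = 0 \<and> Q = 0)" and "\<not> (R = 0 \<and> S = 0)" and "a < b"
  shows "(bad a P Q R S \<and> \<not> bad b P Q R S \<longrightarrow>
            Ind_ab a b (P * R - Q * S) (P * S + Q * R)
              = Ind_ab a b P Q + Ind_ab a b R S - Sign (P * S + Q * R) (Q * S) b / 2)
       \<and> (bad b P Q R S \<and> \<not> bad a P Q R S \<longrightarrow>
            Ind_ab a b (P * R - Q * S) (P * S + Q * R)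
              = Ind_ab a b P Q + Ind_ab a b R S + Sign (P * S + Q * R) (Q * S) a / 2)
       \<and> (bad a P Q R S \<and> bad b P Q R S \<longrightarrow>
            Ind_ab a b (P * R - Q * S) (P * S + Q * R)
              = Ind_ab a b P Q + Ind_ab a b R S)"
proof (intro conjI impI)
  assume h: "bad a P Q R S \<and> \<not> bad b P Q R S"
  then have nz: "P \<noteq> 0" "Q \<noteq> 0" "R \<noteq> 0" "S \<noteq> 0" "P * S + Q * R \<noteq> 0" by (auto simp: bad_def)
  show "Ind_ab a b (P * R - Q * S) (P * S + Q * R)
              = Ind_ab a b P Q + Ind_ab a b R S - Sign (P * S + Q * R) (Q * S) b / 2"
    using core[OF nz assms(3)] h by simp
next
  assume h: "bad b P Q R S \<and> \<not> bad a P Q R S"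
  then have nz: "P \<noteq> 0" "Q \<noteq> 0" "R \<noteq> 0" "S \<noteq> 0" "P * S + Q * R \<noteq> 0" by (auto simp: bad_def)
  show "Ind_ab a b (P * R - Q * S) (P * S + Q * R)
              = Ind_ab a b P Q + Ind_ab a b R S + Sign (P * S + Q * R) (Q * S) a / 2"
    using core[OF nz assms(3)] h by simp
next
  assume h: "bad a P Q R S \<and> bad b P Q R S"
  then have nz: "P \<noteq> 0" "Q \<noteq> 0" "R \<noteq> 0" "S \<noteq> 0" "P * S + Q * R \<noteq> 0" by (auto simp: bad_def)
  show "Ind_ab a b (P * R - Q * S) (P * S + Q * R) = Ind_ab a b P Q + Ind_ab a b R S"
    using core[OF nz assms(3)] h by simp
qed


end
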